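(* Let $n\ge 0$ and $i,j\ge -1$ be integers with $i+j=n-1$, and let $p\in\Gamma_n$ be written as a concatenation $p=c\,q_2\,b\,q_1\,a$ of paths with $q_1\in\Gamma_i$ and $q_2\in\Gamma_j$. If $i$ is odd then $a$ is trivial, and if $j$ is odd then $c$ is trivial. In particular, if $i$ and $j$ are both odd, then the only such decomposition of $p$ is $p=\sigma_j(p)\,b\,\pi_i(p)$.
   Context: Let $\Bbbk$ be a field, $Q=(Q_0,Q_1,s,t)$ a finite quiver, and $A=\Bbbk Q/I$ a finite-dimensional monomial algebra, i.e. $I$ is an ideal generated by paths of length at least $2$. Paths are written from right to left: a path is $p=\alpha_n\cdots\alpha_1$ with arrows $\alpha_i$ and $t(\alpha_i)=s(\alpha_{i+1})$; vertices are the paths of length $0$ (trivial paths); $qp$ denotes concatenation when $t(p)=s(q)$. Let $\mathcal B$ be the set of paths not lying in $I$. If $p=bqa$ for paths $a,b,q$, then $q$ is a divisor of $p$; if $b$ is trivial, $q$ is a suffix; if $a$ is trivial, $q$ is a prefix; proper means $q\neq p$. For $n\ge -1$, a left $n$-ambiguity is a path $p$ with a decomposition $p=u_{-1}u_0u_1\cdots u_n$ such that $u_{-1}\in Q_0$, $u_0\in Q_1$, $u_i\in\mathcal B$ for all $i$, and for every $0\le i\le n-1$, $u_iu_{i+1}\in I$ while no proper suffix of $u_iu_{i+1}$ lies in $I$ (one writes $p=u_0\cdots u_n$). A right $n$-ambiguity is a path with a decomposition $p=v_n\cdots v_0v_{-1}$ with $v_{-1}\in Q_0$, $v_0\in Q_1$,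 $v_i\in\mathcal B$, and for $0\le i\le n-1$, $v_{i+1}v_i\in I$ while no proper prefix of $v_{i+1}v_i$ lies in $I$. A path is a left $n$-ambiguity iff it is a right $n$-ambiguity; such paths are called $n$-ambiguities, and $\Gamma_n$ denotes their set. Both decompositions of an $n$-ambiguity are unique. For $p\in\Gamma_n$ with left decomposition $u_0\cdots u_n$ and right decomposition $v_n\cdots v_0$, and $-1\le m\le n$, set $\sigma_m(p):=u_0\cdots u_m$ (a suffix of $p$ which is an $m$-ambiguity) and $\pi_m(p):=v_m\cdots v_0$ (a prefix of $p$ which is an $m$-ambiguity). *)

theory Defs
  imports Main
begin

record ('v, 'a) quiver =
  verts :: "'v set"
  arrs  :: "'a set"
  qs    :: "'a \<Rightarrow> 'v"
  qt    :: "'a \<Rightarrow> 'v"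

text \<open>A path is a pair (starting vertex, arrows in order of traversal).
  The path written alpha_n ... alpha_1 is (s alpha_1, [alpha_1, ..., alpha_n]);
  the trivial path at v is (v, []).\<close>
type_synonym ('v, 'a) path = "'v \<times> 'a list"

definition is_path :: "('v, 'a) quiver \<Rightarrow> ('v, 'a) path \<Rightarrow> bool" where
  "is_path Q p \<longleftrightarrow> fst p \<in> verts Q \<and> set (snd p) \<subseteq> arrs Q \<and>
     (snd p \<noteq> [] \<longrightarrow> qs Q (hd (snd p)) = fst p) \<and>
     (\<forall>k. Suc k < length (snd p) \<longrightarrow> qt Q (snd p ! k) = qs Q (snd p ! Suc k))"

definition psrc :: "('v, 'a) path \<Rightarrow> 'v" where
  "psrc p = fst p"

definition ptgt :: "('v, 'a) quiver \<Rightarrow> ('v, 'a) path \<Rightarrow> 'v" where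
  "ptgt Q p = (if snd p = [] then fst p else qt Q (last (snd p)))"

text \<open>Concatenation: pcat q p is the path written qp (first p, then q).\<close>
definition pcat :: "('v, 'a) path \<Rightarrow> ('v, 'a) path \<Rightarrow> ('v, 'a) path" where
  "pcat q p = (fst p, snd p @ snd q)"

text \<open>decomp Q p [x1, ..., xk]: p is the (well-defined) concatenation x1 x2 ... xk
  of paths x1, ..., xk, written right to left (xk is traversed first).\<close>
fun decomp :: "('v, 'a) quiver \<Rightarrow> ('v, 'a) path \<Rightarrow> ('v, 'a) path list \<Rightarrow> bool" where
  "decomp Q p [] = False"
| "decomp Q p [x] = (is_path Q x \<and> p = x)"
| "decomp Q p (x # y # rest) =
     (\<exists>r. decomp Q r (y # rest) \<and> is_path Q x \<and> ptgt Q r = psrc x \<and> p = pcat x r)"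

definition divisor :: "('v, 'a) quiver \<Rightarrow> ('v, 'a) path \<Rightarrow> ('v, 'a) path \<Rightarrow> bool" where
  "divisor Q q p \<longleftrightarrow> (\<exists>a b. decomp Q p [b, q, a])"

definition suffix :: "('v, 'a) quiver \<Rightarrow> ('v, 'a) path \<Rightarrow> ('v, 'a) path \<Rightarrow> bool" where
  "suffix Q q p \<longleftrightarrow> (\<exists>a. decomp Q p [q, a])"

definition prefix :: "('v, 'a) quiver \<Rightarrow> ('v, 'a) path \<Rightarrow> ('v, 'a) path \<Rightarrow> bool" where
  "prefix Q q p \<longleftrightarrow> (\<exists>b. decomp Q p [b, q])"

text \<open>The monomial ideal I generated by the set of paths R: a path lies in I iff
  it has a divisor in R.\<close>
definition in_I :: "('v, 'a) quiver \<Rightarrow> ('v, 'a) path set \<Rightarrow> ('v, 'a) path \<Rightarrow> bool" where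
  "in_I Q R p \<longleftrightarrow> is_path Q p \<and> (\<exists>r\<in>R. divisor Q r p)"

definition Bset :: "('v, 'a) quiver \<Rightarrow> ('v, 'a) path set \<Rightarrow> ('v, 'a) path set" where
  "Bset Q R = {p. is_path Q p \<and> \<not> in_I Q R p}"

text \<open>Standing assumptions: finite quiver, I generated by paths of length at least 2,
  and A = kQ/I finite-dimensional (finitely many paths outside I).\<close>
definition monomial_alg :: "('v, 'a) quiver \<Rightarrow> ('v, 'a) path set \<Rightarrow> bool" where
  "monomial_alg Q R \<longleftrightarrow> finite (verts Q) \<and> finite (arrs Q) \<and>
     (\<forall>\<alpha>\<in>arrs Q. qs Q \<alpha> \<in> verts Q \<and> qt Q \<alpha> \<in> verts Q) \<and>
     (\<forall>r\<in>R. is_path Q r \<and> length (snd r) \<ge> 2) \<and>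
     finite (Bset Q R)"

text \<open>Left decomposition p = u_{-1} u_0 u_1 ... u_n with u_{-1} = (w, []) and
  us = [u_0, ..., u_n].\<close>
definition left_dec :: "('v, 'a) quiver \<Rightarrow> ('v, 'a) path set \<Rightarrow> int \<Rightarrow> ('v, 'a) path
    \<Rightarrow> 'v \<Rightarrow> ('v, 'a) path list \<Rightarrow> bool" where
  "left_dec Q R n p w us \<longleftrightarrow> n \<ge> -1 \<and> length us = nat (n + 1) \<and>
     decomp Q p ((w, []) # us) \<and>
     (us \<noteq> [] \<longrightarrow> length (snd (us ! 0)) = 1) \<and>
     (\<forall>u\<in>set us. u \<in> Bset Q R) \<and>
     (\<forall>i. Suc i < length us \<longrightarrow>
        in_I Q R (pcat (us ! i) (us ! Suc i)) \<and>
        (\<forall>q. suffix Q q (pcat (us ! i) (us ! Suc i)) \<and> q \<noteq> pcat (us ! i) (us ! Suc i)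
              \<longrightarrow> \<not> in_I Q R q))"

text \<open>Right decomposition p = v_n ... v_0 v_{-1} with v_{-1} = (w, []) and
  vs = [v_0, ..., v_n].\<close>
definition right_dec :: "('v, 'a) quiver \<Rightarrow> ('v, 'a) path set \<Rightarrow> int \<Rightarrow> ('v, 'a) path
    \<Rightarrow> 'v \<Rightarrow> ('v, 'a) path list \<Rightarrow> bool" where
  "right_dec Q R n p w vs \<longleftrightarrow> n \<ge> -1 \<and> length vs = nat (n + 1) \<and>
     decomp Q p (rev vs @ [(w, [])]) \<and>
     (vs \<noteq> [] \<longrightarrow> length (snd (vs ! 0)) = 1) \<and>
     (\<forall>v\<in>set vs. v \<in> Bset Q R) \<and>
     (\<forall>i. Suc i < length vs \<longrightarrow>
        in_I Q R (pcat (vs ! Suc i) (vs ! i)) \<and>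
        (\<forall>q. prefix Q q (pcat (vs ! Suc i) (vs ! i)) \<and> q \<noteq> pcat (vs ! Suc i) (vs ! i)
              \<longrightarrow> \<not> in_I Q R q))"

definition left_amb :: "('v, 'a) quiver \<Rightarrow> ('v, 'a) path set \<Rightarrow> int \<Rightarrow> ('v, 'a) path \<Rightarrow> bool" where
  "left_amb Q R n p \<longleftrightarrow> (\<exists>w us. left_dec Q R n p w us)"

definition right_amb :: "('v, 'a) quiver \<Rightarrow> ('v, 'a) path set \<Rightarrow> int \<Rightarrow> ('v, 'a) path \<Rightarrow> bool" where
  "right_amb Q R n p \<longleftrightarrow> (\<exists>w vs. right_dec Q R n p w vs)"

text \<open>Gamma_n: the n-ambiguities (left n-ambiguities; by the paper these coincide with
  the right n-ambiguities).\<close>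
definition Gamma :: "('v, 'a) quiver \<Rightarrow> ('v, 'a) path set \<Rightarrow> int \<Rightarrow> ('v, 'a) path set" where
  "Gamma Q R n = {p. left_amb Q R n p}"

text \<open>sigma_m(p) = u_{-1} u_0 ... u_m (u_{-1} trivial), pi_m(p) = v_m ... v_0 v_{-1}.\<close>
definition sigma :: "('v, 'a) quiver \<Rightarrow> ('v, 'a) path set \<Rightarrow> int \<Rightarrow> int \<Rightarrow> ('v, 'a) path
    \<Rightarrow> ('v, 'a) path" where
  "sigma Q R n m p = (THE q. \<exists>w us. left_dec Q R n p w us \<and>
      decomp Q q ((w, []) # take (nat (m + 1)) us))"

definition pi_amb :: "('v, 'a) quiver \<Rightarrow> ('v, 'a) path set \<Rightarrow> int \<Rightarrow> int \<Rightarrow> ('v, 'a) path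
    \<Rightarrow> ('v, 'a) path" where
  "pi_amb Q R n m p = (THE q. \<exists>w vs. right_dec Q R n p w vs \<and>
      decomp Q q (rev (take (nat (m + 1)) vs) @ [(w, [])]))"

end

theory Submission
  imports Defs
begin



definition seg :: "'a list \<Rightarrow> nat \<Rightarrow> nat \<Rightarrow> 'a list" where
  "seg W x y = take (y - x) (drop x W)"

definition mfac :: "('a list \<Rightarrow> bool) \<Rightarrow> bool" where
  "mfac B \<longleftrightarrow> (\<forall>u x v. B x \<longrightarrow> B (u @ x @ v)) \<and> \<not> B []"

lemma seg_len: "length (seg W x y) = min (y - x) (length W - x)"
  by (simp add: seg_def)

lemma seg_append: "a \<le> b \<Longrightarrow> b \<le> c \<Longrightarrow> seg W a b @ seg W b c = seg W a c"
proof -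
  assume h: "a \<le> b" "b \<le> c"
  have "c - a = (b - a) + (c - b)" using h by simp
  then have "take (c - a) (drop a W) = take (b - a) (drop a W) @ take (c - b) (drop (b - a) (drop a W))"
    by (simp add: take_add)
  also have "drop (b - a) (drop a W) = drop b W" using h by simp
  finally show ?thesis unfolding seg_def by simp
qed

lemma seg_fac: "x' \<le> x \<Longrightarrow> y \<le> y' \<Longrightarrow> \<exists>u v. seg W x' y' = u @ seg W x y @ v"
proof (cases "x \<le> y")
  case False
  then show ?thesis by (auto simp: seg_def)
next
  case True
  assume a: "x' \<le> x" "y \<le> y'"
  have "seg W x' y' = seg W x' x @ seg W x y @ seg W y y'"
    using a True by (simp add: seg_append)
  then show ?thesis by blast
qed

lemma mfac_seg: "mfac B \<Longrightarrow> B (seg W x y) \<Longrightarrow> x' \<le> x \<Longrightarrow> y \<le> y' \<Longrightarrow> B (seg W x' y')"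
  unfolding mfac_def by (metis seg_fac)

lemma seg_empty: "y \<le> x \<Longrightarrow> seg W x y = []"
  by (simp add: seg_def)

lemma seg_min: "seg W x y = seg W x (min y (length W))"
  unfolding seg_def by (simp add: min_def)

definition fB :: "('a list \<Rightarrow> bool) \<Rightarrow> 'a list \<Rightarrow> nat \<Rightarrow> nat" where
  "fB B W x = (if B (seg W x (length W)) then (LEAST z. B (seg W x z)) else Suc (length W))"

lemma fB_iff:
  assumes "mfac B" "z \<le> length W"
  shows "fB B W x \<le> z \<longleftrightarrow> B (seg W x z)"
proof
  assume h: "B (seg W x z)"
  then have "B (seg W x (length W))" using mfac_seg[OF assms(1) h] assms(2) by auto
  then show "fB B W x \<le> z" unfolding fB_def using h by (simp add: Least_le)
next
  assume h: "fB B W x \<le> z"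
  then have b: "B (seg W x (length W))" unfolding fB_def using assms(2) by (auto split: if_splits)
  then have "B (seg W x (LEAST z. B (seg W x z)))" by (rule LeastI)
  then have "B (seg W x (fB B W x))" using b unfolding fB_def by simp
  then show "B (seg W x z)" using mfac_seg[OF assms(1)] h by blast
qed

lemma fB_le: "fB B W x \<le> Suc (length W)"
proof -
  { assume b: "B (seg W x (length W))"
    then have "(LEAST z. B (seg W x z)) \<le> length W" by (rule Least_le) }
  then show ?thesis unfolding fB_def by auto
qed

lemma fB_mono: assumes "mfac B" "x \<le> x'" shows "fB B W x \<le> fB B W x'"
proof (cases "fB B W x' \<le> length W")
  case True
  then have "B (seg W x' (fB B W x'))" using fB_iff[OF assms(1) True, of x'] by simp
  then have "B (seg W x (fB B W x'))" using mfac_seg[OF assms(1)] assms(2) by blast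
  then show ?thesis using fB_iff[OF assms(1) True] by simp
next
  case False
  then show ?thesis using fB_le[of B W x] fB_le[of B W x'] by simp
qed

lemma fB_gt: assumes "mfac B" "x \<le> length W" shows "x < fB B W x"
proof (cases "fB B W x \<le> length W")
  case True
  then have "B (seg W x (fB B W x))" using fB_iff[OF assms(1) True, of x] by simp
  then show ?thesis using assms(1) seg_empty[of "fB B W x" x W] unfolding mfac_def by (metis not_le)
next
  case False
  then show ?thesis using assms(2) by simp
qed

fun S :: "(nat \<Rightarrow> nat) \<Rightarrow> nat \<Rightarrow> nat \<Rightarrow> nat \<Rightarrow> nat" where
  "S f a b 0 = a"
| "S f a b (Suc 0) = b"
| "S f a b (Suc (Suc k)) = f (S f a b k)"

definition RCf :: "('a list \<Rightarrow> bool) \<Rightarrow> 'a list \<Rightarrow> nat \<Rightarrow> bool" where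
  "RCf B W N \<longleftrightarrow> (N = 0 \<and> W = []) \<or>
     (0 < N \<and> S (fB B W) 0 1 N = length W \<and> (\<forall>k\<le>N. S (fB B W) 0 1 k < S (fB B W) 0 1 (Suc k)))"




lemma inc_mono: "(\<forall>k<M. g k < g (Suc k)) \<Longrightarrow> k \<le> m \<Longrightarrow> m \<le> M \<Longrightarrow> g k \<le> (g m :: nat)"
proof (induction m)
  case 0 then show ?case by simp
next
  case (Suc m)
  show ?case
  proof (cases "k = Suc m")
    case False
    then have "g k \<le> g m" using Suc by simp
    also have "g m < g (Suc m)" using Suc.prems by simp
    finally show ?thesis by simp
  qed simp
qed

lemma inc_smono: "(\<forall>k<M. g k < g (Suc k)) \<Longrightarrow> k < m \<Longrightarrow> m \<le> M \<Longrightarrow> g k < (g m :: nat)"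
proof -
  assume h: "\<forall>k<M. g k < g (Suc k)" "k < m" "m \<le> M"
  then have "g k < g (Suc k)" by simp
  also have "g (Suc k) \<le> g m" using inc_mono[OF h(1), of "Suc k" m] h by simp
  finally show ?thesis .
qed

lemma seg_rev: "b \<le> length W \<Longrightarrow> seg (rev W) a b = rev (seg W (length W - b) (length W - a))"
proof (cases "a \<le> b")
  case False
  then show ?thesis by (simp add: seg_def)
next
  case True
  assume b: "b \<le> length W"
  have "seg (rev W) a b = take (b - a) (rev (take (length W - a) W))"
    unfolding seg_def by (simp add: drop_rev)
  also have "\<dots> = rev (drop (length W - b) (take (length W - a) W))"
    using True b by (simp add: take_rev)
  also have "drop (length W - b) (take (length W - a) W) = seg W (length W - b) (length W - a)"
    unfolding seg_def by (simp add: drop_take)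
  finally show ?thesis .
qed

lemma mfac_rev: "mfac B \<Longrightarrow> mfac (\<lambda>w. B (rev w))"
  unfolding mfac_def by (metis rev_append rev_is_Nil_conv append_assoc)

lemma galois:
  assumes "mfac B" "x \<le> length W" "y \<le> length W"
  shows "fB B W y \<le> x \<longleftrightarrow> fB (\<lambda>w. B (rev w)) (rev W) (length W - x) \<le> length W - y"
proof -
  have "fB (\<lambda>w. B (rev w)) (rev W) (length W - x) \<le> length W - y \<longleftrightarrow>
        B (rev (seg (rev W) (length W - x) (length W - y)))"
    using fB_iff[OF mfac_rev[OF assms(1)], of "length W - y" "rev W"] by simp
  also have "rev (seg (rev W) (length W - x) (length W - y)) = seg W y x"
    using seg_rev[of "length W - y" W "length W - x"] assms by simp
  finally show ?thesis using fB_iff[OF assms(1) assms(2)] by simp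
qed

lemma S_step: "S f a b (Suc (Suc k)) = f (S f a b k)" by simp

lemma equiv_LR:
  assumes mf: "mfac B" and lc: "RCf (\<lambda>w. B (rev w)) (rev W) N"
  shows "RCf B W N"
proof (cases "N = 0")
  case True then show ?thesis using lc unfolding RCf_def by auto
next
  case False
  define L where "L = length W"
  define f where "f = fB B W"
  define f' where "f' = fB (\<lambda>w. B (rev w)) (rev W)"
  define e where "e = S f 0 1"
  define c where "c = S f' 0 1"
  have N: "0 < N" using False by simp
  have cN: "c N = L" and cinc: "\<forall>k\<le>N. c k < c (Suc k)"
    using lc False unfolding RCf_def c_def f'_def L_def by auto
  have cinc': "\<forall>k<Suc N. c k < c (Suc k)" using cinc by auto
  have cle: "\<And>k. k \<le> N \<Longrightarrow> c k \<le> L"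
  proof -
    fix k assume "k \<le> N"
    then have "c k \<le> c N" using inc_mono[OF cinc', of k N] by simp
    then show "c k \<le> L" using cN by simp
  qed
  have cgt: "L < c (Suc N)" using cinc cN by auto
  have G: "\<And>x y. x \<le> L \<Longrightarrow> y \<le> L \<Longrightarrow> f y \<le> x \<longleftrightarrow> f' (L - x) \<le> L - y"
    unfolding f_def f'_def L_def using galois[OF mf] by simp
  have cs: "\<And>m. c (Suc (Suc m)) = f' (c m)" unfolding c_def by simp
  have es: "\<And>m. e (Suc (Suc m)) = f (e m)" unfolding e_def by simp
  have P: "\<And>K. K \<le> N \<Longrightarrow> c (N - K) + e K \<le> L \<and> L < c (Suc N - K) + e K"
  proof -
    fix K show "K \<le> N \<Longrightarrow> c (N - K) + e K \<le> L \<and> L < c (Suc N - K) + e K"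
    proof (induction K rule: nat_less_induct)
      case (1 K)
      show ?case
      proof (cases K)
        case 0 then show ?thesis using cN cgt by (simp add: e_def)
      next
        case (Suc K')
        show ?thesis
        proof (cases K')
          case 0
          have "c (N - 1) < c (Suc (N - 1))" using cinc by simp
          then have "c (N - 1) < c N" using N by simp
          then show ?thesis using Suc 0 cN by (simp add: e_def)
        next
          case (Suc m)
          have KK: "K = Suc (Suc m)" using Suc \<open>K = Suc K'\<close> by simp
          have IH: "c (N - m) + e m \<le> L \<and> L < c (Suc N - m) + e m"
            using "1.IH" "1.prems" KK by auto
          have eK: "e K = f (e m)" using KK es by simp
          have em: "e m \<le> L" using IH by simp
          have c1: "c (N - K) \<le> L" using cle by simp
          have c2: "c (Suc N - K) \<le> L" using cle "1.prems" KK by simp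
          have "N - m = Suc (Suc (N - K))" using KK "1.prems" by simp
          then have csa: "c (N - m) = f' (c (N - K))" using cs by simp
          have "Suc N - m = Suc (Suc (Suc N - K))" using KK "1.prems" by simp
          then have csb: "c (Suc N - m) = f' (c (Suc N - K))" using cs by simp
          have u: "f (e m) \<le> L - c (N - K)"
            using G[of "L - c (N - K)" "e m"] c1 em csa IH by auto
          have l: "\<not> f (e m) \<le> L - c (Suc N - K)"
            using G[of "L - c (Suc N - K)" "e m"] c2 em csb IH by auto
          show ?thesis using u l eK c1 c2 by auto
        qed
      qed
    qed
  qed
  have eN: "e N = L" using P[of N] by (simp add: c_def)
  have einc: "\<forall>k\<le>N. e k < e (Suc k)"
  proof (intro allI impI)
    fix k assume k: "k \<le> N"
    show "e k < e (Suc k)"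
    proof (cases "k < N")
      case True
      then show ?thesis using P[of k] P[of "Suc k"] by auto
    next
      case False
      then have kN: "k = N" using k by simp
      obtain m where m: "N = Suc m" using N gr0_implies_Suc by blast
      have Pm: "L < c 2 + e m" using P[of m] m by (simp add: numeral_2_eq_2)
      have em: "e m \<le> L" using P[of m] m by simp
      have "\<not> f (e m) \<le> L" using G[of L "e m"] em Pm cs[of 0] by (simp add: c_def numeral_2_eq_2)
      then show ?thesis using kN m eN es by simp
    qed
  qed
  show ?thesis unfolding RCf_def using N eN einc by (simp add: e_def f_def L_def)
qed




definition RD :: "('a list \<Rightarrow> bool) \<Rightarrow> 'a list list \<Rightarrow> bool" where
  "RD B ws \<longleftrightarrow> (ws \<noteq> [] \<longrightarrow> length (ws!0) = 1) \<and> (\<forall>v\<in>set ws. \<not> B v) \<and>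
     (\<forall>k. Suc k < length ws \<longrightarrow> B (ws!k @ ws!Suc k) \<and>
        (\<forall>z < length (ws!k @ ws!Suc k). \<not> B (take z (ws!k @ ws!Suc k))))"

definition pos :: "'a list list \<Rightarrow> nat \<Rightarrow> nat" where
  "pos ws k = length (concat (take k ws))"

lemma seg_concat:
  assumes "k \<le> m"
  shows "seg (concat ws) (pos ws k) (pos ws m) = concat (take (m - k) (drop k ws))"
proof -
  have e1: "concat ws = concat (take k ws) @ concat (drop k ws)"
    by (metis append_take_drop_id concat_append)
  have e2: "concat (drop k ws) = concat (take (m - k) (drop k ws)) @ concat (drop (m - k) (drop k ws))"
    by (metis append_take_drop_id concat_append)
  have e3: "take m ws = take k ws @ take (m - k) (drop k ws)"
    using assms by (metis le_add_diff_inverse take_add)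
  have "pos ws m = pos ws k + length (concat (take (m - k) (drop k ws)))"
    unfolding pos_def using e3 by simp
  then show ?thesis unfolding seg_def pos_def using e1 e2 by simp
qed

lemma pos_Suc: "k < length ws \<Longrightarrow> pos ws (Suc k) = pos ws k + length (ws ! k)"
  unfolding pos_def by (simp add: take_Suc_conv_app_nth)

lemma seg_nth: "k < length ws \<Longrightarrow> seg (concat ws) (pos ws k) (pos ws (Suc k)) = ws ! k"
proof -
  assume h: "k < length ws"
  have "drop k ws = ws ! k # drop (Suc k) ws" using h by (simp add: Cons_nth_drop_Suc)
  then show ?thesis using seg_concat[of k "Suc k" ws] by simp
qed

lemma seg_nth2: "Suc k < length ws \<Longrightarrow>
    seg (concat ws) (pos ws k) (pos ws (Suc (Suc k))) = ws ! k @ ws ! Suc k"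
proof -
  assume h: "Suc k < length ws"
  have "take 2 (drop k ws) = [ws ! k, ws ! Suc k]"
    using h by (metis Cons_nth_drop_Suc Suc_lessD numeral_2_eq_2 take_0 take_Suc_Cons)
  then show ?thesis using seg_concat[of k "Suc (Suc k)" ws] by (simp add: numeral_2_eq_2)
qed

lemma pos_len: "pos ws (length ws) = length (concat ws)"
  unfolding pos_def by simp

lemma pos_0: "pos ws 0 = 0" unfolding pos_def by simp

lemma seg_take: "x \<le> y \<Longrightarrow> seg W a x = take (x - a) (seg W a y)"
  unfolding seg_def by (simp add: min_def)

lemma pos_mono: "k \<le> m \<Longrightarrow> pos ws k \<le> pos ws m"
  unfolding pos_def by (metis append_take_drop_id concat_append le_add1 length_append take_add le_add_diff_inverse)

lemma RD_pos:
  assumes mf: "mfac B" and rd: "RD B ws" and N: "0 < length ws"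
  shows "\<forall>k\<le>length ws. S (fB B (concat ws)) 0 1 k = pos ws k"
proof -
  define W where "W = concat ws"
  define f where "f = fB B W"
  have L: "length W = pos ws (length ws)" unfolding W_def by (simp add: pos_len)
  have step: "\<And>k. Suc (Suc k) \<le> length ws \<Longrightarrow> f (pos ws k) = pos ws (Suc (Suc k))"
  proof -
    fix k assume k: "Suc (Suc k) \<le> length ws"
    have le: "pos ws (Suc (Suc k)) \<le> length W" using L pos_mono k by metis
    have Bx: "B (ws ! k @ ws ! Suc k)" using rd k unfolding RD_def by auto
    have s2: "seg W (pos ws k) (pos ws (Suc (Suc k))) = ws ! k @ ws ! Suc k"
      unfolding W_def using seg_nth2[of k ws] k by (simp add: Suc_le_eq)
    have a: "f (pos ws k) \<le> pos ws (Suc (Suc k))"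
      unfolding f_def using fB_iff[OF mf le] Bx s2 by simp
    have ne: "ws ! Suc k \<noteq> []" using rd k Bx unfolding RD_def by (metis Suc_le_lessD append_Nil2 nth_mem Suc_lessD)
    have len2: "pos ws (Suc (Suc k)) = pos ws k + length (ws ! k @ ws ! Suc k)"
      using pos_Suc[of k ws] pos_Suc[of "Suc k" ws] k by simp
    have "\<not> f (pos ws k) \<le> pos ws (Suc (Suc k)) - 1"
    proof
      assume h: "f (pos ws k) \<le> pos ws (Suc (Suc k)) - 1"
      have le': "pos ws (Suc (Suc k)) - 1 \<le> length W" using le by simp
      have "B (seg W (pos ws k) (pos ws (Suc (Suc k)) - 1))"
        using fB_iff[OF mf le'] h unfolding f_def by simp
      moreover have "seg W (pos ws k) (pos ws (Suc (Suc k)) - 1) =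
          take (pos ws (Suc (Suc k)) - 1 - pos ws k) (ws ! k @ ws ! Suc k)"
        using seg_take[of "pos ws (Suc (Suc k)) - 1" "pos ws (Suc (Suc k))" W "pos ws k"] s2 by simp
      moreover have "pos ws (Suc (Suc k)) - 1 - pos ws k < length (ws ! k @ ws ! Suc k)"
        using len2 ne by simp
      ultimately show False using rd k unfolding RD_def by (metis Suc_le_lessD)
    qed
    then show "f (pos ws k) = pos ws (Suc (Suc k))" using a by simp
  qed
  have "\<And>k. k \<le> length ws \<Longrightarrow> S f 0 1 k = pos ws k"
  proof -
    fix k show "k \<le> length ws \<Longrightarrow> S f 0 1 k = pos ws k"
    proof (induction k rule: nat_less_induct)
      case (1 k)
      show ?case
      proof (cases k)
        case 0 then show ?thesis by (simp add: pos_0)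
      next
        case (Suc k')
        show ?thesis
        proof (cases k')
          case 0
          have "length (ws ! 0) = 1" using rd N unfolding RD_def by auto
          then show ?thesis using Suc 0 pos_Suc[of 0 ws] N by (simp add: pos_0)
        next
          case (Suc m)
          have KK: "k = Suc (Suc m)" using Suc \<open>k = Suc k'\<close> by simp
          have "S f 0 1 m = pos ws m" using "1.IH" "1.prems" KK by auto
          then show ?thesis using KK step "1.prems" by simp
        qed
      qed
    qed
  qed
  then show ?thesis unfolding f_def W_def by simp
qed

lemma RD_ne: "RD B ws \<Longrightarrow> mfac B \<Longrightarrow> k < length ws \<Longrightarrow> ws ! k \<noteq> []"
proof (cases k)
  case 0
  assume "RD B ws" "k < length ws" then show ?thesis using 0 unfolding RD_def by auto
next
  case (Suc m)
  assume h: "RD B ws" "mfac B" "k < length ws"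
  then have "B (ws ! m @ ws ! k)" "\<not> B (ws ! m)" using Suc unfolding RD_def by auto
  then show ?thesis by auto
qed

lemma RD_RCf:
  assumes mf: "mfac B" and rd: "RD B ws"
  shows "RCf B (concat ws) (length ws)"
proof (cases "ws = []")
  case True then show ?thesis unfolding RCf_def by simp
next
  case False
  define N where "N = length ws"
  define W where "W = concat ws"
  have N: "0 < N" using False N_def by simp
  have P: "\<forall>k\<le>N. S (fB B W) 0 1 k = pos ws k" using RD_pos[OF mf rd] N unfolding N_def W_def by simp
  have inc: "\<And>k. k < N \<Longrightarrow> pos ws k < pos ws (Suc k)"
    using RD_ne[OF rd mf] pos_Suc unfolding N_def by fastforce
  have last: "S (fB B W) 0 1 N < S (fB B W) 0 1 (Suc N)"
  proof -
    obtain m where m: "N = Suc m" using N gr0_implies_Suc by blast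
    have L: "length W = pos ws N" unfolding W_def N_def by (simp add: pos_len)
    have "seg W (pos ws m) (pos ws N) = ws ! m" unfolding W_def using seg_nth[of m ws] m N_def by simp
    moreover have "\<not> B (ws ! m)" using rd m N_def unfolding RD_def by simp
    ultimately have "\<not> fB B W (pos ws m) \<le> length W" using fB_iff[OF mf, of "length W" W "pos ws m"] L by simp
    then show ?thesis using P m L by simp
  qed
  have "\<forall>k\<le>N. S (fB B W) 0 1 k < S (fB B W) 0 1 (Suc k)"
  proof (intro allI impI)
    fix k assume "k \<le> N"
    then show "S (fB B W) 0 1 k < S (fB B W) 0 1 (Suc k)"
      using P inc last by (cases "k = N") auto
  qed
  moreover have "S (fB B W) 0 1 N = length W" using P unfolding W_def N_def by (simp add: pos_len)
  ultimately show ?thesis unfolding RCf_def using N N_def W_def by auto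
qed




lemma inc_mono_le: "(\<forall>k<M. g k \<le> g (Suc k)) \<Longrightarrow> k \<le> m \<Longrightarrow> m \<le> M \<Longrightarrow> g k \<le> (g m :: nat)"
proof (induction m)
  case 0 then show ?case by simp
next
  case (Suc m)
  show ?case
  proof (cases "k = Suc m")
    case False
    then have "g k \<le> g m" using Suc by simp
    also have "g m \<le> g (Suc m)" using Suc.prems by simp
    finally show ?thesis by simp
  qed simp
qed

lemma concat_segs:
  "(\<forall>k<M. e k \<le> e (Suc k)) \<Longrightarrow> concat (map (\<lambda>k. seg W (e k) (e (Suc k))) [0..<M]) = seg W (e 0) (e M)"
proof (induction M)
  case 0 then show ?case by (simp add: seg_def)
next
  case (Suc M)
  have m: "e 0 \<le> e M" using inc_mono_le[of "Suc M" e 0 M] Suc.prems by simp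
  show ?case using Suc m by (simp add: seg_append)
qed

lemma RCf_E:
  assumes "RCf B W N" "0 < N"
  shows "S (fB B W) 0 1 N = length W" "\<And>k. k \<le> N \<Longrightarrow> S (fB B W) 0 1 k < S (fB B W) 0 1 (Suc k)"
    "\<And>k. k \<le> N \<Longrightarrow> S (fB B W) 0 1 k \<le> length W"
proof -
  show a: "S (fB B W) 0 1 N = length W" using assms unfolding RCf_def by auto
  show b: "\<And>k. k \<le> N \<Longrightarrow> S (fB B W) 0 1 k < S (fB B W) 0 1 (Suc k)" using assms unfolding RCf_def by auto
  fix k assume k: "k \<le> N"
  have "\<forall>k<N. S (fB B W) 0 1 k < S (fB B W) 0 1 (Suc k)" using b by auto
  then show "S (fB B W) 0 1 k \<le> length W" using inc_mono[of N "S (fB B W) 0 1" k N] k a by simp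
qed

lemma RCf_RD:
  assumes mf: "mfac B" and rc: "RCf B W N" and N: "0 < N"
  defines "E \<equiv> S (fB B W) 0 1"
  defines "ws \<equiv> map (\<lambda>k. seg W (E k) (E (Suc k))) [0..<N]"
  shows "concat ws = W" "RD B ws" "length ws = N"
proof -
  have EN: "E N = length W" and Einc: "\<And>k. k \<le> N \<Longrightarrow> E k < E (Suc k)"
    and Ele: "\<And>k. k \<le> N \<Longrightarrow> E k \<le> length W"
    using RCf_E[OF rc N] unfolding E_def by auto
  have E0: "E 0 = 0" and E1: "E 1 = 1" unfolding E_def by auto
  have ES: "\<And>k. E (Suc (Suc k)) = fB B W (E k)" unfolding E_def by simp
  show "concat ws = W" unfolding ws_def
    using concat_segs[of N E W] Einc EN E0 by (simp add: less_imp_le seg_def)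
  show "length ws = N" unfolding ws_def by simp
  have wsk: "\<And>k. k < N \<Longrightarrow> ws ! k = seg W (E k) (E (Suc k))" unfolding ws_def by simp
  have notB: "\<And>k. k < N \<Longrightarrow> \<not> B (seg W (E k) (E (Suc k)))"
  proof -
    fix k assume k: "k < N"
    have "E (Suc k) < fB B W (E k)" using Einc[of "Suc k"] k ES by simp
    then show "\<not> B (seg W (E k) (E (Suc k)))" using fB_iff[OF mf Ele[of "Suc k"], of "E k"] k by simp
  qed
  have c1: "ws \<noteq> [] \<longrightarrow> length (ws ! 0) = 1"
  proof
    have "1 \<le> length W" using Ele[of 1] Einc[of 0] E0 E1 N by simp
    then show "length (ws ! 0) = 1" using wsk[of 0] N E0 E1 by (simp add: seg_len)
  qed
  have c2: "\<forall>v\<in>set ws. \<not> B v" unfolding ws_def using notB by auto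
  have c3: "\<And>k. Suc k < N \<Longrightarrow> B (ws!k @ ws!Suc k) \<and>
        (\<forall>z < length (ws!k @ ws!Suc k). \<not> B (take z (ws!k @ ws!Suc k)))"
  proof -
    fix k assume k: "Suc k < N"
    have app: "ws!k @ ws!Suc k = seg W (E k) (E (Suc (Suc k)))"
      using wsk[of k] wsk[of "Suc k"] k Einc[of k] Einc[of "Suc k"] by (simp add: seg_append less_imp_le)
    have le2: "E (Suc (Suc k)) \<le> length W" using Ele k by (simp add: Suc_leI)
    have B1: "B (seg W (E k) (E (Suc (Suc k))))" using fB_iff[OF mf le2, of "E k"] ES by simp
    have len: "length (seg W (E k) (E (Suc (Suc k)))) = E (Suc (Suc k)) - E k"
      using le2 by (simp add: seg_len)
    have B2: "\<forall>z < length (ws!k @ ws!Suc k). \<not> B (take z (ws!k @ ws!Suc k))"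
    proof (intro allI impI)
      fix z assume z: "z < length (ws!k @ ws!Suc k)"
      have zl: "E k + z < E (Suc (Suc k))" using z app len by simp
      have "take z (ws!k @ ws!Suc k) = seg W (E k) (E k + z)"
        using seg_take[of "E k + z" "E (Suc (Suc k))" W "E k"] zl app by simp
      moreover have "\<not> B (seg W (E k) (E k + z))"
        using fB_iff[OF mf, of "E k + z" W "E k"] zl le2 ES by simp
      ultimately show "\<not> B (take z (ws!k @ ws!Suc k))" by simp
    qed
    show "B (ws!k @ ws!Suc k) \<and> (\<forall>z < length (ws!k @ ws!Suc k). \<not> B (take z (ws!k @ ws!Suc k)))"
      using B1 B2 app by simp
  qed
  show "RD B ws" unfolding RD_def using c1 c2 c3 \<open>length ws = N\<close> by auto
qed

lemma seg_seg: "b \<le> \<beta> - \<alpha> \<Longrightarrow> seg (seg W \<alpha> \<beta>) a b = seg W (\<alpha> + a) (\<alpha> + b)"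
  unfolding seg_def by (simp add: drop_take min_def add.commute)

lemma sub_f:
  assumes mf: "mfac B" and ab: "\<alpha> \<le> \<beta>" "\<beta> \<le> length W" and y: "y \<le> \<beta> - \<alpha>"
    and fx: "fB B (seg W \<alpha> \<beta>) y \<le> \<beta> - \<alpha>"
  shows "fB B W (\<alpha> + y) = \<alpha> + fB B (seg W \<alpha> \<beta>) y"
proof -
  define X where "X = seg W \<alpha> \<beta>"
  have LX: "length X = \<beta> - \<alpha>" unfolding X_def using ab by (simp add: seg_len)
  have iff: "\<And>x. x \<le> \<beta> - \<alpha> \<Longrightarrow> fB B X y \<le> x \<longleftrightarrow> fB B W (\<alpha> + y) \<le> \<alpha> + x"
  proof -
    fix x assume x: "x \<le> \<beta> - \<alpha>"
    have "fB B X y \<le> x \<longleftrightarrow> B (seg X y x)" using fB_iff[OF mf, of x X y] x LX by simp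
    also have "seg X y x = seg W (\<alpha> + y) (\<alpha> + x)" unfolding X_def using seg_seg x by blast
    also have "B (seg W (\<alpha> + y) (\<alpha> + x)) \<longleftrightarrow> fB B W (\<alpha> + y) \<le> \<alpha> + x"
      using fB_iff[OF mf, of "\<alpha> + x" W "\<alpha> + y"] x ab by simp
    finally show "fB B X y \<le> x \<longleftrightarrow> fB B W (\<alpha> + y) \<le> \<alpha> + x" .
  qed
  have gt: "\<alpha> + y < fB B W (\<alpha> + y)" using fB_gt[OF mf, of "\<alpha> + y" W] y ab by simp
  define z where "z = fB B X y"
  have z: "z \<le> \<beta> - \<alpha>" using fx unfolding z_def X_def by simp
  have "fB B W (\<alpha> + y) \<le> \<alpha> + z" using iff[OF z] z_def by simp
  moreover have "\<not> fB B W (\<alpha> + y) < \<alpha> + z"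
  proof
    assume h: "fB B W (\<alpha> + y) < \<alpha> + z"
    define x0 where "x0 = fB B W (\<alpha> + y) - \<alpha>"
    have "x0 \<le> \<beta> - \<alpha>" "fB B W (\<alpha> + y) = \<alpha> + x0" using h z gt unfolding x0_def by auto
    then have "z \<le> x0" using iff[of x0] z_def by simp
    then show False using h \<open>fB B W (\<alpha> + y) = \<alpha> + x0\<close> by simp
  qed
  ultimately show ?thesis unfolding z_def X_def by simp
qed

lemma SUB:
  assumes mf: "mfac B" and ab: "\<alpha> \<le> \<beta>" "\<beta> \<le> length W" and rc: "RCf B (seg W \<alpha> \<beta>) N"
  shows "S (fB B W) \<alpha> (Suc \<alpha>) N = \<beta> \<and> (0 < N \<longrightarrow> S (fB B W) \<alpha> (Suc \<alpha>) (N - 1) < \<beta>)"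
proof (cases "N = 0")
  case True
  then have "seg W \<alpha> \<beta> = []" using rc unfolding RCf_def by simp
  then have "length (seg W \<alpha> \<beta>) = 0" by simp
  then have "\<beta> = \<alpha>" using ab by (simp add: seg_len)
  then show ?thesis using True by simp
next
  case False
  define X where "X = seg W \<alpha> \<beta>"
  have LX: "length X = \<beta> - \<alpha>" unfolding X_def using ab by (simp add: seg_len)
  define s where "s = S (fB B X) 0 1"
  define t where "t = S (fB B W) \<alpha> (Suc \<alpha>)"
  have N: "0 < N" using False by simp
  have sN: "s N = \<beta> - \<alpha>" and sinc: "\<And>k. k \<le> N \<Longrightarrow> s k < s (Suc k)"
    and sle: "\<And>k. k \<le> N \<Longrightarrow> s k \<le> \<beta> - \<alpha>"
    using RCf_E[OF rc[folded X_def] N] LX unfolding s_def by auto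
  have tk: "\<And>k. k \<le> N \<Longrightarrow> t k = \<alpha> + s k"
  proof -
    fix k show "k \<le> N \<Longrightarrow> t k = \<alpha> + s k"
    proof (induction k rule: nat_less_induct)
      case (1 k)
      show ?case
      proof (cases k)
        case 0 then show ?thesis by (simp add: s_def t_def)
      next
        case (Suc k')
        show ?thesis
        proof (cases k')
          case 0 then show ?thesis using Suc by (simp add: s_def t_def)
        next
          case (Suc m)
          have KK: "k = Suc (Suc m)" using Suc \<open>k = Suc k'\<close> by simp
          have IH: "t m = \<alpha> + s m" using "1.IH" "1.prems" KK by auto
          have sm: "s m \<le> \<beta> - \<alpha>" using sle "1.prems" KK by simp
          have sK: "s k = fB B X (s m)" using KK unfolding s_def by simp
          have "fB B X (s m) \<le> \<beta> - \<alpha>" using sle[of k] "1.prems" sK by simp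
          then have "fB B W (\<alpha> + s m) = \<alpha> + fB B X (s m)"
            using sub_f[OF mf ab sm] unfolding X_def by simp
          then show ?thesis using IH sK KK unfolding t_def by simp
        qed
      qed
    qed
  qed
  have "t N = \<beta>" using tk[of N] sN ab by simp
  moreover have "t (N - 1) < \<beta>" using tk[of "N - 1"] sinc[of "N - 1"] sN N ab by simp
  ultimately show ?thesis using N unfolding t_def by simp
qed

lemma orbit:
  fixes f :: "nat \<Rightarrow> nat" and a b a' b' r r' t :: nat
  assumes "mono f" "S f a b r \<le> S f a' b' r'"
  shows "S f a b (r + 2 * t) \<le> S f a' b' (r' + 2 * t)"
proof (induction t)
  case 0 then show ?case using assms by simp
next
  case (Suc t)
  have "r + 2 * Suc t = Suc (Suc (r + 2 * t))" "r' + 2 * Suc t = Suc (Suc (r' + 2 * t))" by simp_all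
  then show ?case using Suc assms(1) by (simp add: monoD)
qed




lemma main_word:
  assumes mf: "mfac B" and rc: "RCf B W N" and N: "0 < N"
    and ps: "\<alpha> \<le> \<beta>" "\<beta> \<le> \<gamma>" "\<gamma> \<le> \<delta>" "\<delta> \<le> length W"
    and NN: "N1 + N2 = N"
    and r1: "RCf B (seg W \<alpha> \<beta>) N1" and r2: "RCf B (seg W \<gamma> \<delta>) N2"
  shows "(even N1 \<longrightarrow> \<alpha> = 0) \<and> (even N2 \<longrightarrow> \<delta> = length W) \<and>
         (\<alpha> = 0 \<longrightarrow> S (fB B W) 0 1 N1 = \<beta>)"
proof -
  define f where "f = fB B W"
  define L where "L = length W"
  define E where "E = S f 0 1"
  have fm: "mono f" unfolding f_def mono_def using fB_mono[OF mf] by blast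
  have EN: "E N = L" using RCf_E(1)[OF rc N] unfolding E_def f_def L_def by auto
  have EN1: "L < E (Suc N)" using RCf_E(2)[OF rc N, of N] EN unfolding E_def f_def L_def by auto
  have t1: "S f \<alpha> (Suc \<alpha>) N1 = \<beta>"
    using SUB[OF mf ps(1) _ r1] ps unfolding f_def by simp
  have t2: "S f \<gamma> (Suc \<gamma>) N2 = \<delta>" "0 < N2 \<longrightarrow> S f \<gamma> (Suc \<gamma>) (N2 - 1) < \<delta>"
    using SUB[OF mf ps(3) ps(4) r2] unfolding f_def by auto
  have p1: "even N1 \<longrightarrow> \<alpha> = 0"
  proof (intro impI, rule ccontr)
    assume ev: "even N1" and a0: "\<alpha> \<noteq> 0"
    obtain t where tt: "N1 = 2 * t" using ev by blast
    have "S f 0 1 1 \<le> S f \<alpha> (Suc \<alpha>) 0" using a0 by simp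
    then have "S f 0 1 (1 + 2 * t) \<le> S f \<alpha> (Suc \<alpha>) (0 + 2 * t)" using orbit[OF fm] by blast
    then have e1: "E (Suc N1) \<le> \<gamma>" using tt t1 ps unfolding E_def by simp
    then have e1': "S f 0 1 (Suc N1) \<le> S f \<gamma> (Suc \<gamma>) 0" unfolding E_def by simp
    show False
    proof (cases "even N2")
      case True
      then obtain u where u: "N2 = 2 * u" by blast
      have "S f 0 1 (Suc N1 + 2 * u) \<le> S f \<gamma> (Suc \<gamma>) (0 + 2 * u)" using orbit[OF fm e1'] .
      then have "E (Suc N) \<le> \<delta>" using u NN t2 unfolding E_def by simp
      then show False using EN1 ps unfolding L_def by simp
    next
      case False
      then obtain u where u: "N2 = 2 * u + 1" using oddE by blast
      have "S f 0 1 (Suc N1 + 2 * u) \<le> S f \<gamma> (Suc \<gamma>) (0 + 2 * u)" using orbit[OF fm e1'] .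
      then have "E N \<le> S f \<gamma> (Suc \<gamma>) (N2 - 1)" using u NN unfolding E_def by simp
      then have "E N < \<delta>" using t2 u by simp
      then show False using EN ps unfolding L_def by simp
    qed
  qed
  have p2: "even N2 \<longrightarrow> \<delta> = L"
  proof
    assume ev: "even N2"
    obtain u where u: "N2 = 2 * u" using ev by blast
    have "E N1 \<le> \<beta>"
    proof (cases "even N1")
      case True
      then obtain t where tt: "N1 = 2 * t" by blast
      have "S f 0 1 0 \<le> S f \<alpha> (Suc \<alpha>) 0" by simp
      then have "S f 0 1 (0 + 2 * t) \<le> S f \<alpha> (Suc \<alpha>) (0 + 2 * t)" using orbit[OF fm] by blast
      then show ?thesis using tt t1 unfolding E_def by simp
    next
      case False
      then obtain t where tt: "N1 = 2 * t + 1" using oddE by blast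
      have "S f 0 1 1 \<le> S f \<alpha> (Suc \<alpha>) 1" by simp
      then have "S f 0 1 (1 + 2 * t) \<le> S f \<alpha> (Suc \<alpha>) (1 + 2 * t)" using orbit[OF fm] by blast
      then show ?thesis using tt t1 unfolding E_def by simp
    qed
    then have "S f 0 1 N1 \<le> S f \<gamma> (Suc \<gamma>) 0" using ps unfolding E_def by simp
    then have "S f 0 1 (N1 + 2 * u) \<le> S f \<gamma> (Suc \<gamma>) (0 + 2 * u)" using orbit[OF fm] by blast
    then have "E N \<le> \<delta>" using u NN t2 unfolding E_def by simp
    then show "\<delta> = L" using EN ps unfolding L_def by simp
  qed
  have p3: "\<alpha> = 0 \<longrightarrow> S f 0 1 N1 = \<beta>" using t1 by auto
  show ?thesis using p1 p2 p3 unfolding f_def L_def by simp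
qed





definition vtx :: "('v, 'a) quiver \<Rightarrow> ('v, 'a) path \<Rightarrow> nat \<Rightarrow> 'v" where
  "vtx Q p k = (if k = 0 then fst p else qt Q (snd p ! (k - 1)))"

definition sp :: "('v, 'a) quiver \<Rightarrow> ('v, 'a) path \<Rightarrow> nat \<Rightarrow> nat \<Rightarrow> ('v, 'a) path" where
  "sp Q p x y = (vtx Q p x, seg (snd p) x y)"

definition ends :: "('v, 'a) quiver \<Rightarrow> bool" where
  "ends Q \<longleftrightarrow> (\<forall>\<alpha>\<in>arrs Q. qs Q \<alpha> \<in> verts Q \<and> qt Q \<alpha> \<in> verts Q)"

lemma seg_nth_el: "k < length (seg W x y) \<Longrightarrow> seg W x y ! k = W ! (x + k)"
proof -
  assume h: "k < length (seg W x y)"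
  then have "k < length W - x" by (simp add: seg_len)
  then have "x + k < length W" by linarith
  then show ?thesis using h by (simp add: seg_def)
qed

lemma vtx_qs: "is_path Q p \<Longrightarrow> k < length (snd p) \<Longrightarrow> vtx Q p k = qs Q (snd p ! k)"
  unfolding is_path_def vtx_def
  by (cases k) (auto simp: hd_conv_nth)

lemma vtx_verts: "ends Q \<Longrightarrow> is_path Q p \<Longrightarrow> k \<le> length (snd p) \<Longrightarrow> vtx Q p k \<in> verts Q"
proof (cases k)
  case (Suc m)
  assume h: "ends Q" "is_path Q p" "k \<le> length (snd p)"
  then have "snd p ! m \<in> arrs Q" using Suc unfolding is_path_def by (meson Suc_le_lessD nth_mem subsetD)
  then show ?thesis using h Suc unfolding vtx_def ends_def by simp
qed (auto simp: vtx_def is_path_def)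

lemma vtx_end: "ptgt Q p = vtx Q p (length (snd p))"
  unfolding ptgt_def vtx_def by (simp add: last_conv_nth)

lemma set_seg: "set (seg W x y) \<subseteq> set W"
  unfolding seg_def by (meson set_drop_subset set_take_subset subset_trans)

lemma sp_path:
  assumes en: "ends Q" and p: "is_path Q p" and xy: "x \<le> y" "y \<le> length (snd p)"
  shows "is_path Q (sp Q p x y)"
proof -
  have len: "length (seg (snd p) x y) = y - x" using xy by (simp add: seg_len)
  have a: "fst (sp Q p x y) \<in> verts Q" unfolding sp_def using vtx_verts[OF en p] xy by simp
  have b: "set (snd (sp Q p x y)) \<subseteq> arrs Q"
    unfolding sp_def using set_seg p unfolding is_path_def by fastforce
  have c: "snd (sp Q p x y) \<noteq> [] \<longrightarrow> qs Q (hd (snd (sp Q p x y))) = fst (sp Q p x y)"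
  proof
    assume ne: "snd (sp Q p x y) \<noteq> []"
    then have "0 < length (seg (snd p) x y)" unfolding sp_def by simp
    moreover have "seg (snd p) x y \<noteq> []" using ne unfolding sp_def by simp
    ultimately have "hd (seg (snd p) x y) = snd p ! x" "x < length (snd p)"
      using seg_nth_el[of 0 "snd p" x y] len xy hd_conv_nth[of "seg (snd p) x y"] by auto
    then show "qs Q (hd (snd (sp Q p x y))) = fst (sp Q p x y)"
      unfolding sp_def using vtx_qs[OF p] by simp
  qed
  have d: "\<forall>k. Suc k < length (snd (sp Q p x y)) \<longrightarrow>
      qt Q (snd (sp Q p x y) ! k) = qs Q (snd (sp Q p x y) ! Suc k)"
  proof (intro allI impI)
    fix k assume k: "Suc k < length (snd (sp Q p x y))"
    then have k': "Suc k < length (seg (snd p) x y)" unfolding sp_def by simp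
    then have "Suc (x + k) < length (snd p)" using len xy by simp
    then have "qt Q (snd p ! (x + k)) = qs Q (snd p ! Suc (x + k))" using p unfolding is_path_def by blast
    then show "qt Q (snd (sp Q p x y) ! k) = qs Q (snd (sp Q p x y) ! Suc k)"
      unfolding sp_def using seg_nth_el[of k "snd p" x y] seg_nth_el[of "Suc k" "snd p" x y] k' by simp
  qed
  show ?thesis unfolding is_path_def using a b c d by blast
qed

lemma sp_ptgt:
  assumes p: "is_path Q p" and xy: "x \<le> y" "y \<le> length (snd p)"
  shows "ptgt Q (sp Q p x y) = vtx Q p y"
proof (cases "x = y")
  case True then show ?thesis unfolding ptgt_def sp_def by (simp add: seg_def)
next
  case False
  have len: "length (seg (snd p) x y) = y - x" using xy by (simp add: seg_len)
  have ne: "seg (snd p) x y \<noteq> []" using len False xy by auto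
  then have "last (seg (snd p) x y) = snd p ! (y - 1)"
    using False xy seg_nth_el[of "y - x - 1" "snd p" x y] len last_conv_nth[of "seg (snd p) x y"] by auto
  moreover note ne
  ultimately show ?thesis unfolding ptgt_def sp_def vtx_def using False xy by simp
qed

lemma sp_fst: "fst (sp Q p x y) = vtx Q p x" unfolding sp_def by simp
lemma sp_snd: "snd (sp Q p x y) = seg (snd p) x y" unfolding sp_def by simp

definition cat :: "('v, 'a) path list \<Rightarrow> ('v, 'a) path" where
  "cat xs = (fst (last xs), concat (map snd (rev xs)))"

definition conn :: "('v, 'a) quiver \<Rightarrow> ('v, 'a) path list \<Rightarrow> bool" where
  "conn Q xs \<longleftrightarrow> (\<forall>k. Suc k < length xs \<longrightarrow> ptgt Q (xs ! Suc k) = psrc (xs ! k))"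

lemma conn_Cons: "conn Q (x # xs) \<longleftrightarrow> (xs \<noteq> [] \<longrightarrow> ptgt Q (hd xs) = psrc x) \<and> conn Q xs"
  unfolding conn_def
  apply (cases xs)
   apply simp
  apply (auto simp: nth_Cons split: nat.splits)
  done

lemma cat_Cons: "xs \<noteq> [] \<Longrightarrow> cat (x # xs) = pcat x (cat xs)"
  unfolding cat_def pcat_def by simp

lemma cat_single: "cat [x] = x" unfolding cat_def by simp

lemma ptgt_cat:
  "xs \<noteq> [] \<Longrightarrow> conn Q xs \<Longrightarrow> ptgt Q (cat xs) = ptgt Q (hd xs)"
proof (induction xs)
  case Nil then show ?case by simp
next
  case (Cons x xs)
  show ?case
  proof (cases "xs = []")
    case True then show ?thesis by (simp add: cat_single)
  next
    case False
    have IH: "ptgt Q (cat xs) = ptgt Q (hd xs)" using Cons False conn_Cons by blast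
    have cn: "ptgt Q (hd xs) = psrc x" using Cons.prems False conn_Cons by blast
    show ?thesis
    proof (cases "snd x = []")
      case True
      have "cat (x # xs) = cat xs" using False True unfolding cat_def by simp
      moreover have "ptgt Q x = fst x" using True by (simp add: ptgt_def)
      ultimately show ?thesis using IH cn by (simp add: psrc_def)
    next
      case False
      then show ?thesis using \<open>xs \<noteq> []\<close> unfolding ptgt_def cat_def by simp
    qed
  qed
qed

lemma pcat_path:
  assumes x: "is_path Q x" and r: "is_path Q r" and m: "ptgt Q r = psrc x"
  shows "is_path Q (pcat x r)"
proof -
  have a: "fst (pcat x r) \<in> verts Q" using r unfolding pcat_def is_path_def by simp
  have b: "set (snd (pcat x r)) \<subseteq> arrs Q" using x r unfolding pcat_def is_path_def by auto
  have c: "snd (pcat x r) \<noteq> [] \<longrightarrow> qs Q (hd (snd (pcat x r))) = fst (pcat x r)"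
  proof (cases "snd r = []")
    case True
    then show ?thesis using x m unfolding pcat_def is_path_def ptgt_def psrc_def by simp
  next
    case False
    then show ?thesis using r unfolding pcat_def is_path_def by simp
  qed
  have d: "\<forall>k. Suc k < length (snd (pcat x r)) \<longrightarrow>
      qt Q (snd (pcat x r) ! k) = qs Q (snd (pcat x r) ! Suc k)"
  proof (intro allI impI)
    fix k assume k: "Suc k < length (snd (pcat x r))"
    define lr where "lr = length (snd r)"
    have k': "Suc k < lr + length (snd x)" using k unfolding pcat_def lr_def by simp
    consider "Suc k < lr" | "Suc k = lr" | "lr \<le> k" by linarith
    then show "qt Q (snd (pcat x r) ! k) = qs Q (snd (pcat x r) ! Suc k)"
    proof cases
      case 1
      then show ?thesis using r unfolding pcat_def is_path_def lr_def by (simp add: nth_append)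
    next
      case 2
      have ne: "snd r \<noteq> []" using 2 lr_def by auto
      have nx: "snd x \<noteq> []" using 2 k' by auto
      have l: "snd r ! k = last (snd r)" using 2 lr_def ne last_conv_nth[of "snd r"] by (metis diff_Suc_1)
      have h: "qs Q (hd (snd x)) = fst x" using x nx unfolding is_path_def by simp
      have "qt Q (last (snd r)) = fst x" using m ne unfolding ptgt_def psrc_def by simp
      then show ?thesis using 2 l h nx unfolding pcat_def lr_def by (simp add: nth_append hd_conv_nth)
    next
      case 3
      have "Suc (k - lr) < length (snd x)" using 3 k' by simp
      then have "qt Q (snd x ! (k - lr)) = qs Q (snd x ! Suc (k - lr))" using x unfolding is_path_def by blast
      moreover have "Suc k - lr = Suc (k - lr)" using 3 by simp
      ultimately show ?thesis using 3 unfolding pcat_def lr_def by (simp add: nth_append)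
    qed
  qed
  show ?thesis unfolding is_path_def using a b c d by blast
qed

lemma cat_path: "xs \<noteq> [] \<Longrightarrow> (\<forall>x\<in>set xs. is_path Q x) \<Longrightarrow> conn Q xs \<Longrightarrow> is_path Q (cat xs)"
proof (induction xs)
  case Nil then show ?case by simp
next
  case (Cons x xs)
  show ?case
  proof (cases "xs = []")
    case True then show ?thesis using Cons by (simp add: cat_single)
  next
    case False
    have "is_path Q (cat xs)" using Cons False conn_Cons[of Q x xs] by auto
    moreover have "ptgt Q (cat xs) = psrc x" using ptgt_cat[of xs Q] Cons.prems False conn_Cons[of Q x xs] by auto
    ultimately show ?thesis using pcat_path Cons.prems False cat_Cons by (metis list.set_intros(1))
  qed
qed

lemma DC: "decomp Q p xs \<longleftrightarrow> xs \<noteq> [] \<and> (\<forall>x\<in>set xs. is_path Q x) \<and> conn Q xs \<and> p = cat xs"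
proof (induction xs arbitrary: p)
  case Nil then show ?case by simp
next
  case (Cons x xs)
  show ?case
  proof (cases xs)
    case Nil then show ?thesis by (auto simp: cat_single conn_def)
  next
    case (Cons y rest)
    have "decomp Q p (x # xs) \<longleftrightarrow>
       (\<exists>r. decomp Q r xs \<and> is_path Q x \<and> ptgt Q r = psrc x \<and> p = pcat x r)"
      using Cons by simp
    also have "\<dots> \<longleftrightarrow> (\<forall>z\<in>set xs. is_path Q z) \<and> conn Q xs \<and> is_path Q x \<and>
        ptgt Q (cat xs) = psrc x \<and> p = pcat x (cat xs)"
      using Cons.IH Cons by auto
    also have "\<dots> \<longleftrightarrow> (\<forall>z\<in>set (x # xs). is_path Q z) \<and> conn Q (x # xs) \<and> p = cat (x # xs)"
      using ptgt_cat[of xs Q] Cons conn_Cons[of Q x xs] cat_Cons[of xs x] by auto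
    finally show ?thesis by simp
  qed
qed

lemma decomp_path: "decomp Q p xs \<Longrightarrow> is_path Q p"
  using DC cat_path by metis

lemma path_det: "is_path Q x \<Longrightarrow> is_path Q y \<Longrightarrow> snd x = snd y \<Longrightarrow> ptgt Q x = ptgt Q y \<Longrightarrow> x = y"
  unfolding is_path_def ptgt_def by (cases "snd x = []") (auto simp: prod_eq_iff)

definition Bw :: "('v, 'a) path set \<Rightarrow> 'a list \<Rightarrow> bool" where
  "Bw R w \<longleftrightarrow> (\<exists>r\<in>R. \<exists>u v. w = u @ snd r @ v)"

lemma mon_ends: "monomial_alg Q R \<Longrightarrow> ends Q"
  unfolding monomial_alg_def ends_def by blast

lemma mfac_Bw: "monomial_alg Q R \<Longrightarrow> mfac (Bw R)"
proof -
  assume m: "monomial_alg Q R"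
  have a: "\<forall>u x v. Bw R x \<longrightarrow> Bw R (u @ x @ v)"
  proof (intro allI impI)
    fix u x v assume "Bw R x"
    then obtain r u' v' where "r \<in> R" "x = u' @ snd r @ v'" unfolding Bw_def by blast
    then have "u @ x @ v = (u @ u') @ snd r @ (v' @ v)" "r \<in> R" by simp_all
    then show "Bw R (u @ x @ v)" unfolding Bw_def by blast
  qed
  have b: "\<not> Bw R []"
  proof
    assume "Bw R []"
    then obtain r where "r \<in> R" "snd r = []" unfolding Bw_def by auto
    then show False using m unfolding monomial_alg_def by fastforce
  qed
  show ?thesis unfolding mfac_def using a b by blast
qed

lemma in_I_iff:
  assumes mon: "monomial_alg Q R"
  shows "in_I Q R x \<longleftrightarrow> is_path Q x \<and> Bw R (snd x)"
proof
  assume "in_I Q R x"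
  then obtain r a b where r: "r \<in> R" "decomp Q x [b, r, a]" "is_path Q x"
    unfolding in_I_def divisor_def by blast
  then have "snd x = snd a @ snd r @ snd b" using DC[of Q x "[b, r, a]"] by (simp add: cat_def)
  then show "is_path Q x \<and> Bw R (snd x)" using r unfolding Bw_def by blast
next
  assume h: "is_path Q x \<and> Bw R (snd x)"
  then obtain r u v where r: "r \<in> R" "snd x = u @ snd r @ v" and px: "is_path Q x"
    unfolding Bw_def by blast
  have rp: "is_path Q r" and rl: "2 \<le> length (snd r)" using mon r unfolding monomial_alg_def by auto
  have en: "ends Q" using mon_ends[OF mon] .
  define k where "k = length u"
  define m where "m = length (snd r)"
  define L where "L = length (snd x)"
  have L: "L = k + m + length v" unfolding L_def k_def m_def using r by simp
  define a where "a = sp Q x 0 k"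
  define b where "b = sp Q x (k + m) L"
  have pa: "is_path Q a" unfolding a_def using sp_path[OF en px] L L_def by simp
  have pb: "is_path Q b" unfolding b_def using sp_path[OF en px] L L_def by simp
  have xk: "snd x ! k = hd (snd r)" using r rl unfolding k_def by (auto simp: nth_append hd_conv_nth)
  have c1: "ptgt Q a = psrc r"
  proof -
    have "ptgt Q a = vtx Q x k" unfolding a_def using sp_ptgt[OF px] L L_def by simp
    also have "\<dots> = qs Q (snd x ! k)" using vtx_qs[OF px, of k] L L_def rl m_def by simp
    also have "\<dots> = fst r" using xk rp rl unfolding is_path_def by auto
    finally show ?thesis unfolding psrc_def .
  qed
  have c2: "ptgt Q r = psrc b"
  proof -
    have ne: "snd r \<noteq> []" using rl by auto
    have "snd x ! (k + m - 1) = snd r ! (m - 1)"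
      using r rl unfolding k_def m_def by (auto simp: nth_append)
    also have "\<dots> = last (snd r)" using last_conv_nth[OF ne] m_def by simp
    finally have "snd x ! (k + m - 1) = last (snd r)" .
    then show ?thesis using rl unfolding ptgt_def psrc_def b_def sp_def vtx_def m_def by auto
  qed
  have wa: "snd a = u" unfolding a_def sp_def seg_def using r k_def by simp
  have wb: "snd b = v" unfolding b_def sp_def seg_def using r k_def m_def L_def by simp
  have fa: "fst a = fst x" unfolding a_def sp_def vtx_def by simp
  have cn: "conn Q [b, r, a]" using c1 c2 conn_Cons[of Q b "[r, a]"] conn_Cons[of Q r "[a]"]
    conn_Cons[of Q a "[]"] by (simp add: conn_def)
  have ct: "x = cat [b, r, a]" unfolding cat_def using wa wb fa r by (simp add: prod_eq_iff)
  have "decomp Q x [b, r, a]"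
    unfolding DC using pa pb rp cn ct by simp
  then show "in_I Q R x" unfolding in_I_def divisor_def using px r by blast
qed




definition rconn :: "('v, 'a) quiver \<Rightarrow> ('v, 'a) path list \<Rightarrow> bool" where
  "rconn Q vs \<longleftrightarrow> (\<forall>k. Suc k < length vs \<longrightarrow> ptgt Q (vs ! k) = psrc (vs ! Suc k))"

lemma rconn_Cons: "rconn Q (v # vs) \<longleftrightarrow> (vs \<noteq> [] \<longrightarrow> ptgt Q v = psrc (hd vs)) \<and> rconn Q vs"
  unfolding rconn_def
  apply (cases vs)
   apply simp
  apply (auto simp: nth_Cons split: nat.splits)
  done

lemma conn_snoc: "conn Q (xs @ [z]) \<longleftrightarrow> conn Q xs \<and> (xs \<noteq> [] \<longrightarrow> ptgt Q z = psrc (last xs))"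
proof (induction xs)
  case Nil then show ?case by (simp add: conn_def)
next
  case (Cons x xs)
  show ?case
  proof (cases "xs = []")
    case True then show ?thesis using conn_Cons[of Q x "[z]"] conn_Cons[of Q x "[]"] by (simp add: conn_def)
  next
    case False
    then show ?thesis using Cons conn_Cons[of Q x "xs @ [z]"] conn_Cons[of Q x xs] by auto
  qed
qed

lemma conn_rev: "conn Q (rev vs) \<longleftrightarrow> rconn Q vs"
proof (induction vs)
  case Nil then show ?case by (simp add: conn_def rconn_def)
next
  case (Cons v vs)
  show ?case using Cons conn_snoc[of Q "rev vs" v] rconn_Cons[of Q v vs]
    by (auto simp: last_rev)
qed

lemma conn_take: "conn Q xs \<Longrightarrow> conn Q (take k xs)"
  unfolding conn_def by simp

lemma path_triv: "v \<in> verts Q \<Longrightarrow> is_path Q (v, [])"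
  unfolding is_path_def by simp

lemma seg_all: "seg W 0 (length W) = W" unfolding seg_def by simp
lemma seg_drop: "seg W x (length W) = drop x W" unfolding seg_def by simp
lemma seg_take0: "seg W 0 z = take z W" unfolding seg_def by simp

lemma split2:
  assumes en: "ends Q" and X: "is_path Q X" and z: "z \<le> length (snd X)"
  shows "decomp Q X [sp Q X z (length (snd X)), sp Q X 0 z]"
proof -
  have p1: "is_path Q (sp Q X z (length (snd X)))" using sp_path[OF en X] z by simp
  have p2: "is_path Q (sp Q X 0 z)" using sp_path[OF en X] z by simp
  have c: "conn Q [sp Q X z (length (snd X)), sp Q X 0 z]"
    using sp_ptgt[OF X, of 0 z] z conn_Cons[of Q "sp Q X z (length (snd X))" "[sp Q X 0 z]"]
    by (simp add: conn_def sp_fst psrc_def)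
  have "cat [sp Q X z (length (snd X)), sp Q X 0 z] = X"
    unfolding cat_def using seg_append[of 0 z "length (snd X)" "snd X"] z
    by (simp add: sp_def vtx_def seg_all)
  then show ?thesis unfolding DC using p1 p2 c by auto
qed

lemma LDW:
  assumes mon: "monomial_alg Q R" and ld: "left_dec Q R n p w us"
  shows "RD (\<lambda>x. Bw R (rev x)) (map (\<lambda>u. rev (snd u)) us)"
    "rev (snd p) = concat (map (\<lambda>u. rev (snd u)) us)"
    "length us = nat (n + 1)" "w = ptgt Q p" "is_path Q p"
    "\<forall>u\<in>set us. is_path Q u" "conn Q ((w, []) # us)"
proof -
  have en: "ends Q" using mon_ends[OF mon] .
  have d: "decomp Q p ((w, []) # us)" using ld unfolding left_dec_def by simp
  then have paths: "\<forall>x\<in>set ((w, []) # us). is_path Q x" and cn: "conn Q ((w, []) # us)"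
    and pc: "p = cat ((w, []) # us)" using DC by blast+
  show "conn Q ((w, []) # us)" using cn .
  show "\<forall>u\<in>set us. is_path Q u" using paths by simp
  show "is_path Q p" using decomp_path[OF d] .
  show "length us = nat (n + 1)" using ld unfolding left_dec_def by simp
  show "w = ptgt Q p" using ptgt_cat[OF _ cn] pc by (simp add: ptgt_def)
  have "snd p = concat (map snd (rev us))" using pc unfolding cat_def by simp
  then show "rev (snd p) = concat (map (\<lambda>u. rev (snd u)) us)"
    by (simp add: rev_concat rev_map comp_def)
  define ws where "ws = map (\<lambda>u. rev (snd u)) us"
  have c1: "ws \<noteq> [] \<longrightarrow> length (ws ! 0) = 1"
  proof
    assume "ws \<noteq> []"
    then have u: "us \<noteq> []" unfolding ws_def by simp
    then have "ws ! 0 = rev (snd (us ! 0))" unfolding ws_def by (simp add: nth_map)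
    then show "length (ws ! 0) = 1" using ld u unfolding left_dec_def by simp
  qed
  have c2: "\<forall>v\<in>set ws. \<not> Bw R (rev v)"
    using ld in_I_iff[OF mon] unfolding left_dec_def ws_def Bset_def by auto
  have c3: "\<And>k. Suc k < length ws \<Longrightarrow> Bw R (rev (ws!k @ ws!Suc k)) \<and>
        (\<forall>z < length (ws!k @ ws!Suc k). \<not> Bw R (rev (take z (ws!k @ ws!Suc k))))"
  proof -
    fix k assume k: "Suc k < length ws"
    define X where "X = pcat (us ! k) (us ! Suc k)"
    have k': "Suc k < length us" using k unfolding ws_def by simp
    have iX: "in_I Q R X" and sf: "\<forall>q. suffix Q q X \<and> q \<noteq> X \<longrightarrow> \<not> in_I Q R q"
      using ld k' unfolding left_dec_def X_def by auto
    have pX: "is_path Q X" and bX: "Bw R (snd X)" using iX in_I_iff[OF mon] by auto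
    have wX: "ws!k @ ws!Suc k = rev (snd X)" unfolding ws_def X_def pcat_def using k' by simp
    have "\<forall>z < length (ws!k @ ws!Suc k). \<not> Bw R (rev (take z (ws!k @ ws!Suc k)))"
    proof (intro allI impI)
      fix z assume z: "z < length (ws!k @ ws!Suc k)"
      define l where "l = length (snd X)"
      have zl: "z < l" using z wX l_def by simp
      define q where "q = sp Q X (l - z) l"
      have "decomp Q X [q, sp Q X 0 (l - z)]" using split2[OF en pX, of "l - z"] unfolding q_def l_def by simp
      then have "suffix Q q X" unfolding suffix_def by blast
      moreover have "q \<noteq> X"
      proof
        assume "q = X"
        then have "length (snd q) = l" using l_def by simp
        then show False unfolding q_def sp_def l_def using zl by (simp add: seg_len l_def)
      qed
      ultimately have "\<not> in_I Q R q" using sf by blast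
      moreover have "is_path Q q" unfolding q_def using sp_path[OF en pX] l_def by simp
      ultimately have "\<not> Bw R (snd q)" using in_I_iff[OF mon] by blast
      moreover have "snd q = drop (l - z) (snd X)" unfolding q_def sp_def l_def by (simp add: seg_drop)
      moreover have "rev (take z (rev (snd X))) = drop (l - z) (snd X)"
        unfolding l_def by (simp add: take_rev)
      ultimately show "\<not> Bw R (rev (take z (ws!k @ ws!Suc k)))" using wX by simp
    qed
    then show "Bw R (rev (ws!k @ ws!Suc k)) \<and>
        (\<forall>z < length (ws!k @ ws!Suc k). \<not> Bw R (rev (take z (ws!k @ ws!Suc k))))"
      using bX wX by simp
  qed
  show "RD (\<lambda>x. Bw R (rev x)) (map (\<lambda>u. rev (snd u)) us)"
    unfolding RD_def using c1 c2 c3 unfolding ws_def by blast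
qed




lemma RDW:
  assumes mon: "monomial_alg Q R" and rd: "right_dec Q R n p w vs"
  shows "RD (Bw R) (map snd vs)" "snd p = concat (map snd vs)" "length vs = nat (n + 1)" "w = fst p"
proof -
  have en: "ends Q" using mon_ends[OF mon] .
  have d: "decomp Q p (rev vs @ [(w, [])])" using rd unfolding right_dec_def by simp
  then have pc: "p = cat (rev vs @ [(w, [])])" using DC by blast
  show "w = fst p" using pc unfolding cat_def by simp
  show "snd p = concat (map snd vs)" using pc unfolding cat_def by simp
  show "length vs = nat (n + 1)" using rd unfolding right_dec_def by simp
  define ws where "ws = map snd vs"
  have c1: "ws \<noteq> [] \<longrightarrow> length (ws ! 0) = 1"
  proof
    assume "ws \<noteq> []"
    then have u: "vs \<noteq> []" unfolding ws_def by simp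
    then have "ws ! 0 = snd (vs ! 0)" unfolding ws_def by (simp add: nth_map)
    then show "length (ws ! 0) = 1" using rd u unfolding right_dec_def by simp
  qed
  have c2: "\<forall>v\<in>set ws. \<not> Bw R v"
    using rd in_I_iff[OF mon] unfolding right_dec_def ws_def Bset_def by auto
  have c3: "\<And>k. Suc k < length ws \<Longrightarrow> Bw R (ws!k @ ws!Suc k) \<and>
        (\<forall>z < length (ws!k @ ws!Suc k). \<not> Bw R (take z (ws!k @ ws!Suc k)))"
  proof -
    fix k assume k: "Suc k < length ws"
    define X where "X = pcat (vs ! Suc k) (vs ! k)"
    have k': "Suc k < length vs" using k unfolding ws_def by simp
    have iX: "in_I Q R X" and sf: "\<forall>q. prefix Q q X \<and> q \<noteq> X \<longrightarrow> \<not> in_I Q R q"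
      using rd k' unfolding right_dec_def X_def by auto
    have pX: "is_path Q X" and bX: "Bw R (snd X)" using iX in_I_iff[OF mon] by auto
    have wX: "ws!k @ ws!Suc k = snd X" unfolding ws_def X_def pcat_def using k' by simp
    have "\<forall>z < length (ws!k @ ws!Suc k). \<not> Bw R (take z (ws!k @ ws!Suc k))"
    proof (intro allI impI)
      fix z assume z: "z < length (ws!k @ ws!Suc k)"
      define l where "l = length (snd X)"
      have zl: "z < l" using z wX l_def by simp
      define q where "q = sp Q X 0 z"
      have "decomp Q X [sp Q X z l, q]" using split2[OF en pX, of z] zl unfolding q_def l_def by simp
      then have "prefix Q q X" unfolding prefix_def by blast
      moreover have "q \<noteq> X"
      proof
        assume "q = X"
        then have "length (snd q) = l" using l_def by simp
        then show False unfolding q_def sp_def l_def using zl by (simp add: seg_len l_def)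
      qed
      ultimately have "\<not> in_I Q R q" using sf by blast
      moreover have "is_path Q q" unfolding q_def using sp_path[OF en pX] zl l_def by simp
      ultimately have "\<not> Bw R (snd q)" using in_I_iff[OF mon] by blast
      moreover have "snd q = take z (snd X)" unfolding q_def sp_def by (simp add: seg_take0)
      ultimately show "\<not> Bw R (take z (ws!k @ ws!Suc k))" using wX by simp
    qed
    then show "Bw R (ws!k @ ws!Suc k) \<and>
        (\<forall>z < length (ws!k @ ws!Suc k). \<not> Bw R (take z (ws!k @ ws!Suc k)))"
      using bX wX by simp
  qed
  show "RD (Bw R) (map snd vs)" unfolding RD_def using c1 c2 c3 unfolding ws_def by blast
qed

lemma RD_right_dec:
  assumes mon: "monomial_alg Q R" and n: "n \<ge> -1" and len: "length vs = nat (n + 1)"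
    and paths: "\<forall>v\<in>set vs. is_path Q v" and rc: "rconn Q vs"
    and d: "decomp Q p (rev vs @ [(w, [])])" and rd: "RD (Bw R) (map snd vs)"
  shows "right_dec Q R n p w vs"
proof -
  have c1: "vs \<noteq> [] \<longrightarrow> length (snd (vs ! 0)) = 1"
    using rd unfolding RD_def by (auto simp: nth_map)
  have c2: "\<forall>v\<in>set vs. v \<in> Bset Q R"
    using rd paths in_I_iff[OF mon] unfolding RD_def Bset_def by auto
  have c3: "\<And>i. Suc i < length vs \<Longrightarrow> in_I Q R (pcat (vs ! Suc i) (vs ! i)) \<and>
        (\<forall>q. prefix Q q (pcat (vs ! Suc i) (vs ! i)) \<and> q \<noteq> pcat (vs ! Suc i) (vs ! i)
              \<longrightarrow> \<not> in_I Q R q)"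
  proof -
    fix i assume i: "Suc i < length vs"
    define X where "X = pcat (vs ! Suc i) (vs ! i)"
    have wX: "snd X = snd (vs ! i) @ snd (vs ! Suc i)" unfolding X_def pcat_def by simp
    have pX: "is_path Q X" unfolding X_def
      using pcat_path[of Q "vs ! Suc i" "vs ! i"] paths rc i unfolding rconn_def by auto
    have rdi: "Bw R (snd (vs ! i) @ snd (vs ! Suc i))"
      and rdz: "\<forall>z < length (snd X). \<not> Bw R (take z (snd X))"
      using rd i wX unfolding RD_def by auto
    have "in_I Q R X" using in_I_iff[OF mon] pX rdi wX by simp
    moreover have "\<forall>q. prefix Q q X \<and> q \<noteq> X \<longrightarrow> \<not> in_I Q R q"
    proof (intro allI impI)
      fix q assume h: "prefix Q q X \<and> q \<noteq> X"
      then obtain b where "decomp Q X [b, q]" unfolding prefix_def by blast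
      then have Xc: "X = cat [b, q]" using DC by blast
      then have sX: "snd X = snd q @ snd b" unfolding cat_def by simp
      have "snd b \<noteq> []"
      proof
        assume "snd b = []"
        then have "X = q" using Xc unfolding cat_def by (simp add: prod_eq_iff)
        then show False using h by simp
      qed
      then have "length (snd q) < length (snd X)" "snd q = take (length (snd q)) (snd X)" using sX by auto
      then have "\<not> Bw R (snd q)" using rdz by metis
      then show "\<not> in_I Q R q" using in_I_iff[OF mon] by blast
    qed
    ultimately show "in_I Q R (pcat (vs ! Suc i) (vs ! i)) \<and>
        (\<forall>q. prefix Q q (pcat (vs ! Suc i) (vs ! i)) \<and> q \<noteq> pcat (vs ! Suc i) (vs ! i)
              \<longrightarrow> \<not> in_I Q R q)" unfolding X_def by blast
  qed
  show ?thesis unfolding right_dec_def using n len d c1 c2 c3 by blast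
qed

lemma take_pos: "take (pos ws m) (concat ws) = concat (take m ws)"
proof -
  have "concat ws = concat (take m ws) @ concat (drop m ws)" by (metis append_take_drop_id concat_append)
  then show ?thesis unfolding pos_def by (metis append_eq_conv_conj)
qed




lemma rconn_take: "rconn Q vs \<Longrightarrow> rconn Q (take m vs)"
  unfolding rconn_def by simp

lemma decomp_rs:
  assumes paths: "\<forall>v\<in>set vs. is_path Q v" and rc: "rconn Q vs" and w: "w \<in> verts Q"
    and h: "vs \<noteq> [] \<longrightarrow> w = psrc (vs ! 0)"
  shows "decomp Q (w, concat (map snd vs)) (rev vs @ [(w, [])])"
proof -
  have c: "conn Q (rev vs @ [(w, [])])"
    using conn_snoc[of Q "rev vs" "(w, [])"] conn_rev[of Q vs] rc h
    by (simp add: last_rev ptgt_def hd_conv_nth)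
  have "(w, concat (map snd vs)) = cat (rev vs @ [(w, [])])" unfolding cat_def by simp
  then show ?thesis unfolding DC using c paths path_triv[OF w] by auto
qed

lemma PI:
  assumes mon: "monomial_alg Q R" and pp: "is_path Q p" and rc: "RCf (Bw R) (snd p) N"
    and N: "0 < N" and nN: "int N = n + 1" and m: "m \<le> N" and mi: "nat (i + 1) = m"
  shows "pi_amb Q R n i p = (fst p, take (S (fB (Bw R) (snd p)) 0 1 m) (snd p))"
proof -
  have en: "ends Q" using mon_ends[OF mon] .
  have mf: "mfac (Bw R)" using mfac_Bw[OF mon] .
  define W where "W = snd p"
  define E where "E = S (fB (Bw R) W) 0 1"
  define vs where "vs = map (\<lambda>k. sp Q p (E k) (E (Suc k))) [0..<N]"
  have rc': "RCf (Bw R) W N" using rc W_def by simp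
  have EN: "E N = length W" and Einc: "\<And>k. k \<le> N \<Longrightarrow> E k < E (Suc k)"
    and Ele: "\<And>k. k \<le> N \<Longrightarrow> E k \<le> length W"
    using RCf_E[OF rc' N] unfolding E_def by auto
  have E0: "E 0 = 0" unfolding E_def by simp
  have ws: "map snd vs = map (\<lambda>k. seg W (E k) (E (Suc k))) [0..<N]"
    unfolding vs_def W_def by (simp add: sp_snd)
  have r0: "concat (map (\<lambda>k. seg W (E k) (E (Suc k))) [0..<N]) = W"
    "RD (Bw R) (map (\<lambda>k. seg W (E k) (E (Suc k))) [0..<N])"
    using RCf_RD[OF mf rc' N] unfolding E_def by auto
  have rdw: "concat (map snd vs) = W" "RD (Bw R) (map snd vs)"
    using r0 by (simp_all only: ws)
  have lenvs: "length vs = N" unfolding vs_def by simp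
  have vsk: "\<And>k. k < N \<Longrightarrow> vs ! k = sp Q p (E k) (E (Suc k))" unfolding vs_def by simp
  have paths: "\<forall>v\<in>set vs. is_path Q v"
  proof
    fix v assume "v \<in> set vs"
    then obtain k where k: "k < N" "v = vs ! k" using lenvs by (metis in_set_conv_nth)
    then show "is_path Q v" using vsk[OF k(1)] sp_path[OF en pp, of "E k" "E (Suc k)"]
      Einc[of k] Ele[of "Suc k"] W_def by simp
  qed
  have rcn: "rconn Q vs"
    unfolding rconn_def
  proof (intro allI impI)
    fix k assume k: "Suc k < length vs"
    then show "ptgt Q (vs ! k) = psrc (vs ! Suc k)"
      using vsk[of k] vsk[of "Suc k"] lenvs sp_ptgt[OF pp, of "E k" "E (Suc k)"]
        Einc[of k] Ele[of "Suc k"] W_def by (simp add: psrc_def sp_fst)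
  qed
  have fv: "fst p \<in> verts Q" using pp unfolding is_path_def by simp
  have h0: "\<And>m. take m vs \<noteq> [] \<longrightarrow> fst p = psrc (take m vs ! 0)"
    using vsk[of 0] N E0 unfolding psrc_def by (auto simp: sp_fst vtx_def)
  have dall: "decomp Q p (rev vs @ [(fst p, [])])"
    using decomp_rs[OF paths rcn fv] h0[of N] rdw(1) lenvs W_def by simp
  have rdec: "right_dec Q R n p (fst p) vs"
    by (rule RD_right_dec[OF mon _ _ paths rcn dall rdw(2)]) (use nN lenvs in auto)
  have posE: "\<And>k. k \<le> N \<Longrightarrow> E k = pos (map snd vs) k"
    using RD_pos[OF mf rdw(2)] rdw lenvs N unfolding E_def by simp
  have key: "\<And>w' vs' q. right_dec Q R n p w' vs' \<Longrightarrow>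
      decomp Q q (rev (take (nat (i + 1)) vs') @ [(w', [])]) \<Longrightarrow> q = (fst p, take (E m) W)"
  proof -
    fix w' vs' q assume r: "right_dec Q R n p w' vs'" and d: "decomp Q q (rev (take (nat (i + 1)) vs') @ [(w', [])])"
    have a: "RD (Bw R) (map snd vs')" "W = concat (map snd vs')" "length vs' = N" "w' = fst p"
      using RDW[OF mon r] nN W_def by auto
    have q: "q = (w', concat (map snd (take m vs')))"
      using d mi unfolding DC cat_def by simp
    have "E m = pos (map snd vs') m"
      using RD_pos[OF mf a(1)] a N m unfolding E_def by simp
    then have "take (E m) W = concat (map snd (take m vs'))"
      using take_pos[of "map snd vs'" m] a(2) by (simp add: take_map)
    then show "q = (fst p, take (E m) W)" using q a by simp
  qed
  have ex: "decomp Q (fst p, take (E m) W) (rev (take (nat (i + 1)) vs) @ [(fst p, [])])"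
  proof -
    have "decomp Q (fst p, concat (map snd (take m vs))) (rev (take m vs) @ [(fst p, [])])"
      using decomp_rs[of "take m vs" Q "fst p"] paths rconn_take[OF rcn] fv h0[of m]
      by (meson in_set_takeD)
    moreover have "concat (map snd (take m vs)) = take (E m) W"
      using take_pos[of "map snd vs" m] posE[OF m] rdw(1) by (simp add: take_map)
    ultimately show ?thesis using mi by simp
  qed
  show ?thesis unfolding pi_amb_def
  proof (rule the_equality)
    show "\<exists>w vs. right_dec Q R n p w vs \<and>
        decomp Q (fst p, take (S (fB (Bw R) (snd p)) 0 1 m) (snd p)) (rev (take (nat (i + 1)) vs) @ [(w, [])])"
      using rdec ex unfolding E_def W_def by blast
  next
    fix q assume "\<exists>w vs. right_dec Q R n p w vs \<and> decomp Q q (rev (take (nat (i + 1)) vs) @ [(w, [])])"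
    then show "q = (fst p, take (S (fB (Bw R) (snd p)) 0 1 m) (snd p))"
      using key unfolding E_def W_def by blast
  qed
qed




lemma SIG:
  assumes mon: "monomial_alg Q R" and ld0: "left_dec Q R n p w0 us0"
    and N: "0 < nat (n + 1)" and m: "m \<le> nat (n + 1)" and mj: "nat (j + 1) = m"
  shows "sigma Q R n j p = sp Q p (length (snd p) - S (fB (\<lambda>x. Bw R (rev x)) (rev (snd p))) 0 1 m) (length (snd p))"
proof -
  have en: "ends Q" using mon_ends[OF mon] .
  define B' where "B' = (\<lambda>x. Bw R (rev x))"
  have mf: "mfac B'" unfolding B'_def using mfac_rev[OF mfac_Bw[OF mon]] .
  define W where "W = snd p"
  define L where "L = length W"
  define c where "c = S (fB B' (rev W)) 0 1"
  define T where "T = sp Q p (L - c m) L"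
  have key: "\<And>w us q. left_dec Q R n p w us \<Longrightarrow> decomp Q q ((w, []) # take m us) \<Longrightarrow> q = T"
  proof -
    fix w us q assume ld: "left_dec Q R n p w us" and d: "decomp Q q ((w, []) # take m us)"
    define ws where "ws = map (\<lambda>u. rev (snd u)) us"
    have a: "RD B' ws" "rev W = concat ws" "length us = nat (n + 1)" "w = ptgt Q p" "is_path Q p"
      using LDW[OF mon ld] unfolding B'_def ws_def W_def by auto
    have lw: "length ws = nat (n + 1)" using a(3) ws_def by simp
    have cp: "c m = pos ws m"
      using RD_pos[OF mf a(1)] lw N m a(2) unfolding c_def by simp
    have dq: "conn Q ((w, []) # take m us)" "q = cat ((w, []) # take m us)" using d DC by blast+
    have "snd q = concat (map snd (rev (take m us)))" using dq(2) unfolding cat_def by simp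
    then have "rev (snd q) = concat (take m ws)"
      unfolding ws_def by (simp add: rev_concat rev_map comp_def take_map)
    also have "\<dots> = take (c m) (rev W)" using take_pos[of ws m] cp a(2) by simp
    finally have sq: "snd q = drop (L - c m) W"
      unfolding L_def by (metis rev_rev_ident rev_take length_rev)
    have cmL: "c m \<le> L"
    proof -
      have "pos ws m \<le> pos ws (length ws)" using pos_mono m lw by simp
      then show ?thesis using cp a(2) unfolding L_def by (metis length_rev pos_len)
    qed
    have tq: "ptgt Q q = ptgt Q p"
      using ptgt_cat[of "(w, []) # take m us" Q] dq a(4) by (simp add: ptgt_def)
    have pq: "is_path Q q" using decomp_path[OF d] .
    have pT: "is_path Q T" unfolding T_def using sp_path[OF en a(5)] cmL L_def W_def by simp
    have sT: "snd T = drop (L - c m) W" unfolding T_def L_def W_def by (simp add: sp_snd seg_drop)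
    have tT: "ptgt Q T = ptgt Q p" unfolding T_def using sp_ptgt[OF a(5)] vtx_end[of Q p] L_def W_def by simp
    show "q = T" using path_det[OF pq pT] sq sT tq tT by simp
  qed
  have ex: "decomp Q (cat ((w0, []) # take m us0)) ((w0, []) # take m us0)"
  proof -
    have "conn Q ((w0, []) # us0)" "\<forall>u\<in>set us0. is_path Q u" "w0 = ptgt Q p" "is_path Q p"
      using LDW[OF mon ld0] by auto
    moreover have "take (Suc m) ((w0, []) # us0) = (w0, []) # take m us0" by simp
    ultimately have "conn Q ((w0, []) # take m us0)" using conn_take by metis
    moreover have "is_path Q (w0, [])"
    proof -
      have "ptgt Q p \<in> verts Q" using vtx_verts[OF en \<open>is_path Q p\<close>, of "length (snd p)"] vtx_end[of Q p] by simp
      then show ?thesis using path_triv \<open>w0 = ptgt Q p\<close> by simp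
    qed
    ultimately show ?thesis unfolding DC using \<open>\<forall>u\<in>set us0. is_path Q u\<close> by (auto dest: in_set_takeD)
  qed
  show ?thesis unfolding sigma_def
  proof (rule the_equality)
    show "\<exists>w us. left_dec Q R n p w us \<and>
        decomp Q (sp Q p (length (snd p) - S (fB (\<lambda>x. Bw R (rev x)) (rev (snd p))) 0 1 m) (length (snd p)))
          ((w, []) # take (nat (j + 1)) us)"
      using ld0 ex key[OF ld0 ex] mj unfolding T_def c_def B'_def L_def W_def by auto
  next
    fix q assume "\<exists>w us. left_dec Q R n p w us \<and> decomp Q q ((w, []) # take (nat (j + 1)) us)"
    then show "q = sp Q p (length (snd p) - S (fB (\<lambda>x. Bw R (rev x)) (rev (snd p))) 0 1 m) (length (snd p))"
      using key mj unfolding T_def c_def B'_def L_def W_def by blast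
  qed
qed




lemma GR:
  assumes mon: "monomial_alg Q R" and ld: "left_dec Q R k x w us"
  shows "RCf (Bw R) (snd x) (nat (k + 1))" "RCf (\<lambda>y. Bw R (rev y)) (rev (snd x)) (nat (k + 1))"
proof -
  have a: "RD (\<lambda>y. Bw R (rev y)) (map (\<lambda>u. rev (snd u)) us)"
    "rev (snd x) = concat (map (\<lambda>u. rev (snd u)) us)" "length us = nat (k + 1)"
    using LDW[OF mon ld] by auto
  have mf': "mfac (\<lambda>y. Bw R (rev y))" using mfac_rev[OF mfac_Bw[OF mon]] .
  show r: "RCf (\<lambda>y. Bw R (rev y)) (rev (snd x)) (nat (k + 1))"
    using RD_RCf[OF mf' a(1)] a(2,3) by simp
  show "RCf (Bw R) (snd x) (nat (k + 1))" using equiv_LR[OF mfac_Bw[OF mon] r] .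
qed

theorem mainTheorem10:
  fixes Q :: "('v, 'a) quiver" and R :: "('v, 'a) path set"
    and n i j :: int and p a b c q1 q2 :: "('v, 'a) path"
  assumes "monomial_alg Q R"
    and "n \<ge> 0" and "i \<ge> -1" and "j \<ge> -1" and "i + j = n - 1"
    and "p \<in> Gamma Q R n"
    and "decomp Q p [c, q2, b, q1, a]"
    and "q1 \<in> Gamma Q R i" and "q2 \<in> Gamma Q R j"
  shows "(odd i \<longrightarrow> snd a = []) \<and> (odd j \<longrightarrow> snd c = []) \<and>
         (odd i \<and> odd j \<longrightarrow> q2 = sigma Q R n j p \<and> q1 = pi_amb Q R n i p)"
proof -
  note mon = assms(1)
  have en: "ends Q" using mon_ends[OF mon] .
  have mf: "mfac (Bw R)" using mfac_Bw[OF mon] .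
  have mf': "mfac (\<lambda>y. Bw R (rev y))" using mfac_rev[OF mf] .
  obtain w us where ldp: "left_dec Q R n p w us" using assms(6) unfolding Gamma_def left_amb_def by blast
  obtain w1 us1 where ld1: "left_dec Q R i q1 w1 us1" using assms(8) unfolding Gamma_def left_amb_def by blast
  obtain w2 us2 where ld2: "left_dec Q R j q2 w2 us2" using assms(9) unfolding Gamma_def left_amb_def by blast
  define N where "N = nat (n + 1)"
  define N1 where "N1 = nat (i + 1)"
  define N2 where "N2 = nat (j + 1)"
  have NN: "N1 + N2 = N" unfolding N_def N1_def N2_def using assms(2-5) by simp
  have N0: "0 < N" unfolding N_def using assms(2) by simp
  have nN: "int N = n + 1" unfolding N_def using assms(2) by simp
  have rcp: "RCf (Bw R) (snd p) N" using GR(1)[OF mon ldp] N_def by simp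
  have rc1: "RCf (Bw R) (snd q1) N1" using GR(1)[OF mon ld1] N1_def by simp
  have rc2: "RCf (Bw R) (snd q2) N2" using GR(1)[OF mon ld2] N2_def by simp
  have rc2': "RCf (\<lambda>y. Bw R (rev y)) (rev (snd q2)) N2" using GR(2)[OF mon ld2] N2_def by simp
  have dd: "\<forall>x\<in>set [c, q2, b, q1, a]. is_path Q x" "conn Q [c, q2, b, q1, a]" "p = cat [c, q2, b, q1, a]"
    using assms(7) DC by blast+
  have pp: "is_path Q p" using decomp_path[OF assms(7)] .
  define W where "W = snd p"
  define L where "L = length W"
  define \<alpha> where "\<alpha> = length (snd a)"
  define \<beta> where "\<beta> = \<alpha> + length (snd q1)"
  define \<gamma> where "\<gamma> = \<beta> + length (snd b)"
  define \<delta> where "\<delta> = \<gamma> + length (snd q2)"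
  have Wd: "W = snd a @ snd q1 @ snd b @ snd q2 @ snd c" "fst p = fst a"
    using dd(3) unfolding W_def cat_def by simp_all
  have Ld: "L = \<delta> + length (snd c)" unfolding L_def \<delta>_def \<gamma>_def \<beta>_def \<alpha>_def Wd by simp
  have s1: "seg W \<alpha> \<beta> = snd q1" unfolding seg_def Wd \<beta>_def \<alpha>_def by simp
  have s2: "seg W \<gamma> \<delta> = snd q2" unfolding seg_def Wd \<delta>_def \<gamma>_def \<beta>_def \<alpha>_def by simp
  have cn: "ptgt Q q2 = psrc c" "ptgt Q a = psrc q1"
    using dd(2) unfolding conn_def by (auto dest: spec[of _ 0] spec[of _ 3])
  have tp: "ptgt Q p = ptgt Q c" using ptgt_cat[of "[c, q2, b, q1, a]" Q] dd by simp
  have MW: "(even N1 \<longrightarrow> \<alpha> = 0) \<and> (even N2 \<longrightarrow> \<delta> = length W) \<and>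
         (\<alpha> = 0 \<longrightarrow> S (fB (Bw R) W) 0 1 N1 = \<beta>)"
  proof (rule main_word[OF mf rcp[folded W_def] N0, of \<alpha> \<beta> \<gamma> \<delta> N1 N2])
    show "\<alpha> \<le> \<beta>" "\<beta> \<le> \<gamma>" "\<gamma> \<le> \<delta>" using \<beta>_def \<gamma>_def \<delta>_def by auto
    show "\<delta> \<le> length W" using Ld L_def by simp
    show "N1 + N2 = N" using NN .
    show "RCf (Bw R) (seg W \<alpha> \<beta>) N1" using s1 rc1 by simp
    show "RCf (Bw R) (seg W \<gamma> \<delta>) N2" using s2 rc2 by simp
  qed
  have pi: "odd i \<longleftrightarrow> even N1" unfolding N1_def using assms(3) by (simp add: even_nat_iff)
  have pj: "odd j \<longleftrightarrow> even N2" unfolding N2_def using assms(4) by (simp add: even_nat_iff)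
  have A: "odd i \<longrightarrow> snd a = []" using MW pi \<alpha>_def by simp
  have C: "odd j \<longrightarrow> snd c = []" using MW pj Ld L_def by simp
  have D: "odd i \<and> odd j \<longrightarrow> q2 = sigma Q R n j p \<and> q1 = pi_amb Q R n i p"
  proof
    assume oo: "odd i \<and> odd j"
    have a0: "\<alpha> = 0" and dL: "\<delta> = L" and Eb: "S (fB (Bw R) W) 0 1 N1 = \<beta>"
      using MW pi pj oo L_def by auto
    have sa: "snd a = []" "snd c = []" using A C oo by auto
    have m1: "N1 \<le> N" "N2 \<le> N" using NN by auto
    have PIe: "pi_amb Q R n i p = (fst p, take (S (fB (Bw R) (snd p)) 0 1 N1) (snd p))"
      using PI[OF mon pp rcp N0 nN m1(1)] N1_def by simp
    have fq1: "fst q1 = fst p"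
      using cn(2) sa Wd(2) unfolding ptgt_def psrc_def by simp
    have q1e: "q1 = pi_amb Q R n i p"
      using PIe fq1 s1 a0 Eb unfolding W_def by (simp add: prod_eq_iff seg_take0)
    have SIe: "sigma Q R n j p = sp Q p (length (snd p) - S (fB (\<lambda>x. Bw R (rev x)) (rev (snd p))) 0 1 N2) (length (snd p))"
      using SIG[OF mon ldp _ m1(2)[unfolded N_def]] N0 N_def N2_def by simp
    have gL: "\<gamma> \<le> L" using Ld \<delta>_def by simp
    have rq2: "rev (snd q2) = seg (rev W) 0 (L - \<gamma>)"
      using seg_rev[of "L - \<gamma>" W 0] s2 dL gL L_def by simp
    have "S (fB (\<lambda>x. Bw R (rev x)) (rev W)) 0 (Suc 0) N2 = L - \<gamma>"
      using SUB[OF mf', of 0 "L - \<gamma>" "rev W" N2] rc2' rq2 L_def by simp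
    then have cg: "length (snd p) - S (fB (\<lambda>x. Bw R (rev x)) (rev (snd p))) 0 1 N2 = \<gamma>"
      using gL unfolding W_def L_def by simp
    have q2e: "q2 = sp Q p \<gamma> L"
    proof (rule path_det)
      show "is_path Q q2" using dd(1) by simp
      show "is_path Q (sp Q p \<gamma> L)" using sp_path[OF en pp gL] L_def W_def by simp
      show "snd q2 = snd (sp Q p \<gamma> L)" using s2 dL by (simp add: sp_snd W_def)
      show "ptgt Q q2 = ptgt Q (sp Q p \<gamma> L)"
        using cn(1) sa(2) tp sp_ptgt[OF pp gL] vtx_end[of Q p] L_def W_def
        by (simp add: ptgt_def psrc_def)
    qed
    show "q2 = sigma Q R n j p \<and> q1 = pi_amb Q R n i p"
      using q2e SIe cg q1e L_def W_def by simp
  qed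
  show ?thesis using A C D by blast
qed


end
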